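(* Let $(\mathfrak{A},\mathfrak{A}_0)$ be a CQ*-algebra and $\mathfrak{A}_1$ the locally convex $*$-algebra as in the context, let $\omega$ be a $\|\cdot\|$-continuous positive linear functional on $\mathfrak{A}_0$ with GNS construction $(\pi_\omega,\lambda_\omega,\mathcal{H}_\omega)$, and let $\overline{\omega}$ denote (the restriction to $\mathfrak{A}_1$ of) its $\|\cdot\|$-continuous extension, a positive linear functional on $\mathfrak{A}_1$ with GNS construction $(\pi_{\overline{\omega}},\lambda_{\overline{\omega}},\mathcal{H}_{\overline{\omega}})$. Then $\overline{\omega}$ is admissible, i.e. $\pi_{\overline{\omega}}(X)$ is a bounded operator on $\mathcal{H}_{\overline{\omega}}$ for every $X\in\mathfrak{A}_1$, and: (1) $\mathcal{H}_{\overline{\omega}}=\mathcal{H}_\omega$ (i.e. $\lambda_\omega(A)\mapsto\lambda_{\overline{\omega}}(A)$ extends to a unitary identification of $\mathcal{H}_\omega$ with $\mathcal{H}_{\overline{\omega}}$); (2) $\pi_{\overline{\omega}}(A)=\pi_\omega(A)$ and $\lambda_{\overline{\omega}}(A)=\lambda_\omega(A)$ for all $A\in\mathfrak{A}_0$; (3) for every $X\in\mathfrak{A}_1$ there is a sequence $\{A_n\}\subset\mathfrak{A}_0(N)$ for some $N\in\mathbb{N}$ such that $\pi_\omega(A_n)\to\pi_{\overline{\omega}}(X)$ strongly, i.e. $\lim_n\pi_\omega(A_n)x=\pi_{\overline{\omega}}(X)x$ for every $x\in\mathcal{H}_\omega$; consequently $\pi_{\overline{\omega}}(\mathfrak{A}_1)$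 is contained in the bicommutant $\pi_\omega(\mathfrak{A}_0)''$; (4) for every $X\in\mathfrak{A}_1$ there is a sequence $\{A_n\}\subset\mathfrak{A}_0(N)$ for some $N\in\mathbb{N}$ such that $\lim_n\lambda_\omega(A_n)=\lambda_{\overline{\omega}}(X)$.
   Context: Let $\mathfrak{A}_0$ be a unital C*-algebra with C*-norm $\|\cdot\|_0$, and $\|\cdot\|$ another norm on $\mathfrak{A}_0$ with $\|A\|\le\|A\|_0$, $\|AB\|\le\|A\|\,\|B\|_0$, $\|A^*\|=\|A\|$; $\mathfrak{A}$ is the completion of $(\mathfrak{A}_0,\|\cdot\|)$. For $N\in\mathbb{N}$, $\mathfrak{A}_0(N)=\{A\in\mathfrak{A}_0:\|A\|_0\le N\}$, and $\mathfrak{A}_1=\bigcup_N\overline{\mathfrak{A}_0(N)}\subset\mathfrak{A}$ (closures in $\|\cdot\|$), the completion of $\mathfrak{A}_0$ for the inductive limit topology ($A_n\to A$ iff $\{A_n\}\subset\mathfrak{A}_0(N)$ for some $N$ and $\|A_n-A\|\to0$). $\mathfrak{A}_1$ is a *-algebra with product $XY=\|\cdot\|\text{-}\lim A_nB_n$ for $A_n\to X$, $B_n\to Y$ in $\|\cdot\|$ with $\{A_n\},\{B_n\}\subset\mathfrak{A}_0(N)$, and involution the $\|\cdot\|$-continuous extension of that of $\mathfrak{A}_0$. A $\|\cdot\|$-continuous positive linear functional $\omega$ on $\mathfrak{A}_0$ satisfies $\omega(A^*A)\ge0$ and $|\omega(A)|\le\gamma\|A\|$; $\overline{\omega}(X)=\lim\omega(A_n)$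 for $A_n\to X$. GNS construction of $\omega$ on $\mathfrak{A}_0$: $\lambda_\omega:\mathfrak{A}_0\to\mathcal{H}_\omega$ with dense range, $(\lambda_\omega(A)|\lambda_\omega(B))=\omega(B^*A)$, $\pi_\omega(A)\lambda_\omega(B)=\lambda_\omega(AB)$. GNS construction of a positive linear functional $\overline{\omega}$ on the *-algebra $\mathfrak{A}_1$: $\mathcal{H}_{\overline{\omega}}$ is the Hilbert space completion of $\lambda_{\overline{\omega}}(\mathfrak{A}_1)$, where $(\lambda_{\overline{\omega}}(X)|\lambda_{\overline{\omega}}(Y))=\overline{\omega}(Y^*X)$, and $\pi_{\overline{\omega}}(X)\lambda_{\overline{\omega}}(Y)=\lambda_{\overline{\omega}}(XY)$, $X,Y\in\mathfrak{A}_1$. *)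

theory Defs
  imports Complex_Main
begin

text \<open>The type 'a carries the Banach space A (completion of A0 in the
norm nA); A0 is a subset of it, carrying the C*-algebra structure (product mulA,
unit unitA, C*-norm n0A). The involution invA is defined on all of A (continuous extension).\<close>

record 'a cq_data =
  smA :: "complex \<Rightarrow> 'a \<Rightarrow> 'a"
  nA :: "'a \<Rightarrow> real"
  A0 :: "'a set"
  mulA :: "'a \<Rightarrow> 'a \<Rightarrow> 'a"
  invA :: "'a \<Rightarrow> 'a"
  unitA :: "'a"
  n0A :: "'a \<Rightarrow> real"

definition ntends :: "('x::ab_group_add \<Rightarrow> real) \<Rightarrow> (nat \<Rightarrow> 'x) \<Rightarrow> 'x \<Rightarrow> bool" where
  "ntends nm f x \<longleftrightarrow> (\<lambda>k. nm (f k - x)) \<longlonglongrightarrow> 0"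

definition ncauchy :: "('x::ab_group_add \<Rightarrow> real) \<Rightarrow> (nat \<Rightarrow> 'x) \<Rightarrow> bool" where
  "ncauchy nm f \<longleftrightarrow> (\<forall>e>0. \<exists>M. \<forall>i\<ge>M. \<forall>j\<ge>M. nm (f i - f j) < e)"

definition nclosure :: "('x::ab_group_add \<Rightarrow> real) \<Rightarrow> 'x set \<Rightarrow> 'x set" where
  "nclosure nm S = {x. \<exists>f. (\<forall>k. f k \<in> S) \<and> ntends nm f x}"

definition cvec_space :: "(complex \<Rightarrow> 'x::ab_group_add \<Rightarrow> 'x) \<Rightarrow> bool" where
  "cvec_space sm \<longleftrightarrow> (\<forall>x. sm 1 x = x) \<and> (\<forall>a b x. sm a (sm b x) = sm (a * b) x)
     \<and> (\<forall>a b x. sm (a + b) x = sm a x + sm b x) \<and> (\<forall>a x y. sm a (x + y) = sm a x + sm a y)"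

definition csubspace :: "(complex \<Rightarrow> 'x::ab_group_add \<Rightarrow> 'x) \<Rightarrow> 'x set \<Rightarrow> bool" where
  "csubspace sm S \<longleftrightarrow> 0 \<in> S \<and> (\<forall>x\<in>S. \<forall>y\<in>S. x + y \<in> S) \<and> (\<forall>c. \<forall>x\<in>S. sm c x \<in> S)"

definition norm_on :: "(complex \<Rightarrow> 'x::ab_group_add \<Rightarrow> 'x) \<Rightarrow> ('x \<Rightarrow> real) \<Rightarrow> 'x set \<Rightarrow> bool" where
  "norm_on sm nm S \<longleftrightarrow> (\<forall>x\<in>S. \<forall>y\<in>S. nm (x + y) \<le> nm x + nm y)
     \<and> (\<forall>c. \<forall>x\<in>S. nm (sm c x) = cmod c * nm x)
     \<and> (\<forall>x\<in>S. nm x \<ge> 0 \<and> (nm x = 0 \<longleftrightarrow> x = 0))"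

definition CQ_setting :: "('a::ab_group_add, 'b) cq_data_scheme \<Rightarrow> bool" where
  "CQ_setting D \<longleftrightarrow>
     cvec_space (smA D) \<and> norm_on (smA D) (nA D) UNIV
   \<and> (\<forall>f. ncauchy (nA D) f \<longrightarrow> (\<exists>x. ntends (nA D) f x))
   \<and> csubspace (smA D) (A0 D) \<and> nclosure (nA D) (A0 D) = UNIV
   \<and> unitA D \<in> A0 D
   \<and> (\<forall>a\<in>A0 D. \<forall>b\<in>A0 D. mulA D a b \<in> A0 D)
   \<and> (\<forall>a\<in>A0 D. invA D a \<in> A0 D)
   \<and> (\<forall>a\<in>A0 D. \<forall>b\<in>A0 D. \<forall>c\<in>A0 D. mulA D (mulA D a b) c = mulA D a (mulA D b c))
   \<and> (\<forall>a\<in>A0 D. \<forall>b\<in>A0 D. \<forall>c\<in>A0 D. mulA D a (b + c) = mulA D a b + mulA D a c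
                                      \<and> mulA D (a + b) c = mulA D a c + mulA D b c)
   \<and> (\<forall>z. \<forall>a\<in>A0 D. \<forall>b\<in>A0 D. mulA D (smA D z a) b = smA D z (mulA D a b)
                              \<and> mulA D a (smA D z b) = smA D z (mulA D a b))
   \<and> (\<forall>a\<in>A0 D. mulA D (unitA D) a = a \<and> mulA D a (unitA D) = a)
   \<and> (\<forall>x y. invA D (x + y) = invA D x + invA D y)
   \<and> (\<forall>z x. invA D (smA D z x) = smA D (cnj z) (invA D x))
   \<and> (\<forall>x. invA D (invA D x) = x)
   \<and> (\<forall>a\<in>A0 D. \<forall>b\<in>A0 D. invA D (mulA D a b) = mulA D (invA D b) (invA D a))
   \<and> norm_on (smA D) (n0A D) (A0 D)
   \<and> (\<forall>a\<in>A0 D. \<forall>b\<in>A0 D. n0A D (mulA D a b) \<le> n0A D a * n0A D b)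
   \<and> (\<forall>a\<in>A0 D. n0A D (mulA D (invA D a) a) = (n0A D a)\<^sup>2)
   \<and> (\<forall>f. (\<forall>k. f k \<in> A0 D) \<and> ncauchy (n0A D) f \<longrightarrow> (\<exists>x\<in>A0 D. ntends (n0A D) f x))
   \<and> (\<forall>a\<in>A0 D. nA D a \<le> n0A D a)
   \<and> (\<forall>a\<in>A0 D. \<forall>b\<in>A0 D. nA D (mulA D a b) \<le> nA D a * n0A D b)
   \<and> (\<forall>x. nA D (invA D x) = nA D x)"

definition A0N :: "('a, 'b) cq_data_scheme \<Rightarrow> nat \<Rightarrow> 'a set" where
  "A0N D N = {a \<in> A0 D. n0A D a \<le> real N}"

definition A1 :: "('a::ab_group_add, 'b) cq_data_scheme \<Rightarrow> 'a set" where
  "A1 D = (\<Union>N. nclosure (nA D) (A0N D N))"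

definition prod1 :: "('a::ab_group_add, 'b) cq_data_scheme \<Rightarrow> 'a \<Rightarrow> 'a \<Rightarrow> 'a" where
  "prod1 D X Y = (THE Z. \<exists>N f g. (\<forall>k. f k \<in> A0N D N \<and> g k \<in> A0N D N)
      \<and> ntends (nA D) f X \<and> ntends (nA D) g Y
      \<and> ntends (nA D) (\<lambda>k. mulA D (f k) (g k)) Z)"

definition pos_functional :: "('a::ab_group_add, 'b) cq_data_scheme \<Rightarrow> ('a \<Rightarrow> complex) \<Rightarrow> bool" where
  "pos_functional D \<omega> \<longleftrightarrow>
     (\<forall>a\<in>A0 D. \<forall>b\<in>A0 D. \<omega> (a + b) = \<omega> a + \<omega> b)
   \<and> (\<forall>z. \<forall>a\<in>A0 D. \<omega> (smA D z a) = z * \<omega> a)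
   \<and> (\<forall>a\<in>A0 D. Im (\<omega> (mulA D (invA D a) a)) = 0 \<and> Re (\<omega> (mulA D (invA D a) a)) \<ge> 0)
   \<and> (\<exists>\<gamma>. \<forall>a\<in>A0 D. cmod (\<omega> a) \<le> \<gamma> * nA D a)"

definition omegabar :: "('a::ab_group_add, 'b) cq_data_scheme \<Rightarrow> ('a \<Rightarrow> complex) \<Rightarrow> 'a \<Rightarrow> complex" where
  "omegabar D \<omega> X = (THE c. \<exists>f. (\<forall>k. f k \<in> A0 D) \<and> ntends (nA D) f X \<and> (\<lambda>k. \<omega> (f k)) \<longlonglongrightarrow> c)"

text \<open>Complex Hilbert spaces: inner product linear in the first argument.\<close>
record 'h hspace =
  hsm :: "complex \<Rightarrow> 'h \<Rightarrow> 'h"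
  hip :: "'h \<Rightarrow> 'h \<Rightarrow> complex"

definition hnorm :: "('h, 'b) hspace_scheme \<Rightarrow> 'h \<Rightarrow> real" where
  "hnorm H x = sqrt (Re (hip H x x))"

definition is_chilbert :: "('h::ab_group_add, 'b) hspace_scheme \<Rightarrow> bool" where
  "is_chilbert H \<longleftrightarrow> cvec_space (hsm H)
   \<and> (\<forall>x y z. hip H (x + y) z = hip H x z + hip H y z)
   \<and> (\<forall>c x y. hip H (hsm H c x) y = c * hip H x y)
   \<and> (\<forall>x y. hip H y x = cnj (hip H x y))
   \<and> (\<forall>x. x \<noteq> 0 \<longrightarrow> Re (hip H x x) > 0)
   \<and> (\<forall>f. ncauchy (hnorm H) f \<longrightarrow> (\<exists>x. ntends (hnorm H) f x))"

definition bounded_op :: "('h::ab_group_add, 'b) hspace_scheme \<Rightarrow> ('h \<Rightarrow> 'h) \<Rightarrow> bool" where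
  "bounded_op H T \<longleftrightarrow> (\<forall>x y. T (x + y) = T x + T y) \<and> (\<forall>c x. T (hsm H c x) = hsm H c (T x))
     \<and> (\<exists>C. \<forall>x. hnorm H (T x) \<le> C * hnorm H x)"

definition unitary_map :: "('h::ab_group_add, 'b) hspace_scheme \<Rightarrow> ('k::ab_group_add, 'c) hspace_scheme \<Rightarrow> ('h \<Rightarrow> 'k) \<Rightarrow> bool" where
  "unitary_map H K U \<longleftrightarrow> bij U \<and> (\<forall>x y. U (x + y) = U x + U y) \<and> (\<forall>c x. U (hsm H c x) = hsm K c (U x))
     \<and> (\<forall>x y. hip K (U x) (U y) = hip H x y)"

definition op_ext :: "('h::ab_group_add, 'b) hspace_scheme \<Rightarrow> ('h \<Rightarrow> 'h) \<Rightarrow> 'h set \<Rightarrow> 'h \<Rightarrow> 'h" where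
  "op_ext H T S x = (THE y. \<exists>f. (\<forall>k. f k \<in> S) \<and> ntends (hnorm H) f x \<and> ntends (hnorm H) (\<lambda>k. T (f k)) y)"

definition in_bicommutant :: "('h::ab_group_add, 'b) hspace_scheme \<Rightarrow> ('h \<Rightarrow> 'h) set \<Rightarrow> ('h \<Rightarrow> 'h) \<Rightarrow> bool" where
  "in_bicommutant H S T \<longleftrightarrow> (\<forall>B. bounded_op H B \<and> (\<forall>P\<in>S. \<forall>x. B (P x) = P (B x))
       \<longrightarrow> (\<forall>x. B (T x) = T (B x)))"

definition is_GNS0 :: "('a::ab_group_add, 'b) cq_data_scheme \<Rightarrow> ('a \<Rightarrow> complex) \<Rightarrow> ('h::ab_group_add, 'c) hspace_scheme
     \<Rightarrow> ('a \<Rightarrow> 'h) \<Rightarrow> ('a \<Rightarrow> 'h \<Rightarrow> 'h) \<Rightarrow> bool" where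
  "is_GNS0 D \<omega> H lam p \<longleftrightarrow> is_chilbert H
   \<and> (\<forall>a\<in>A0 D. \<forall>b\<in>A0 D. lam (a + b) = lam a + lam b)
   \<and> (\<forall>z. \<forall>a\<in>A0 D. lam (smA D z a) = hsm H z (lam a))
   \<and> nclosure (hnorm H) (lam ` A0 D) = UNIV
   \<and> (\<forall>a\<in>A0 D. \<forall>b\<in>A0 D. hip H (lam a) (lam b) = \<omega> (mulA D (invA D b) a))
   \<and> (\<forall>a\<in>A0 D. bounded_op H (p a))
   \<and> (\<forall>a\<in>A0 D. \<forall>b\<in>A0 D. p a (lam b) = lam (mulA D a b))"

text \<open>GNS construction of omegabar on the *-algebra A1; p X is only prescribed on lam ` A1.\<close>
definition is_GNS1 :: "('a::ab_group_add, 'b) cq_data_scheme \<Rightarrow> ('a \<Rightarrow> complex) \<Rightarrow> ('k::ab_group_add, 'c) hspace_scheme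
     \<Rightarrow> ('a \<Rightarrow> 'k) \<Rightarrow> ('a \<Rightarrow> 'k \<Rightarrow> 'k) \<Rightarrow> bool" where
  "is_GNS1 D \<omega> K lam p \<longleftrightarrow> is_chilbert K
   \<and> (\<forall>X\<in>A1 D. \<forall>Y\<in>A1 D. lam (X + Y) = lam X + lam Y)
   \<and> (\<forall>z. \<forall>X\<in>A1 D. lam (smA D z X) = hsm K z (lam X))
   \<and> nclosure (hnorm K) (lam ` A1 D) = UNIV
   \<and> (\<forall>X\<in>A1 D. \<forall>Y\<in>A1 D. hip K (lam X) (lam Y) = omegabar D \<omega> (prod1 D (invA D Y) X))
   \<and> (\<forall>X\<in>A1 D. \<forall>Y\<in>A1 D. p X (lam Y) = lam (prod1 D X Y))"

end

theory Submission
  imports Defs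
begin

lemma squeeze0:
  fixes a b :: "nat \<Rightarrow> real"
  assumes "\<And>k. 0 \<le> a k" "\<And>k. a k \<le> b k" "b \<longlonglongrightarrow> 0"
  shows "a \<longlonglongrightarrow> 0"
  using assms by (intro tendsto_sandwich[of "\<lambda>_. 0" a sequentially b 0]) auto

locale gnorm =
  fixes nm :: "'x::ab_group_add \<Rightarrow> real"
  assumes tri: "nm (x + y) \<le> nm x + nm y"
    and nneg: "0 \<le> nm x"
    and zero_iff: "nm x = 0 \<longleftrightarrow> x = 0"
    and neg: "nm (- x) = nm x"
begin

lemma nm0[simp]: "nm 0 = 0" using zero_iff by simp

lemma commute: "nm (x - y) = nm (y - x)"
  using neg[of "x - y"] by simp

lemma tri_diff: "nm (x - z) \<le> nm (x - y) + nm (y - z)"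
  using tri[of "x - y" "y - z"] by simp

lemma tri_minus: "nm (x - y) \<le> nm x + nm y"
  using tri[of x "-y"] neg[of y] by simp

lemma rev_tri: "\<bar>nm x - nm y\<bar> \<le> nm (x - y)"
proof -
  have "nm x \<le> nm (x - y) + nm y" using tri[of "x - y" y] by simp
  moreover have "nm y \<le> nm (y - x) + nm x" using tri[of "y - x" x] by simp
  ultimately show ?thesis using commute[of x y] by linarith
qed

lemma ntends_iff: "ntends nm f x \<longleftrightarrow> (\<forall>e>0. \<exists>M. \<forall>k\<ge>M. nm (f k - x) < e)"
  unfolding ntends_def LIMSEQ_iff using nneg by simp

lemma ntends_unique:
  assumes "ntends nm f x" "ntends nm f y" shows "x = y"
proof -
  have "(\<lambda>k. nm (f k - x) + nm (f k - y)) \<longlonglongrightarrow> 0 + 0"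
    using assms unfolding ntends_def by (intro tendsto_add)
  moreover have "\<forall>k. nm (x - y) \<le> nm (f k - x) + nm (f k - y)"
  proof
    fix k show "nm (x - y) \<le> nm (f k - x) + nm (f k - y)"
      using tri_diff[of x y "f k"] commute[of x "f k"] by linarith
  qed
  ultimately have "nm (x - y) \<le> 0"
    by (intro LIMSEQ_le_const[of "\<lambda>k. nm (f k - x) + nm (f k - y)"]) auto
  then show ?thesis using nneg[of "x - y"] zero_iff[of "x - y"] by simp
qed

lemma ntends_const: "ntends nm (\<lambda>k. x) x"
  unfolding ntends_def by simp

lemma ntends_cong0:
  assumes "ntends nm f x" "(\<lambda>k. nm (g k - f k)) \<longlonglongrightarrow> 0"
  shows "ntends nm g x"
  unfolding ntends_def
proof (rule squeeze0)
  show "(\<lambda>k. nm (g k - f k) + nm (f k - x)) \<longlonglongrightarrow> 0"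
    using tendsto_add[OF assms(2) assms(1)[unfolded ntends_def]] by simp
  show "nm (g k - x) \<le> nm (g k - f k) + nm (f k - x)" for k by (rule tri_diff)
qed (rule nneg)

lemma ntends_add:
  assumes "ntends nm f x" "ntends nm g y"
  shows "ntends nm (\<lambda>k. f k + g k) (x + y)"
  unfolding ntends_def
proof (rule squeeze0)
  show "(\<lambda>k. nm (f k - x) + nm (g k - y)) \<longlonglongrightarrow> 0"
    using tendsto_add[OF assms[unfolded ntends_def]] by simp
  show "nm (f k + g k - (x + y)) \<le> nm (f k - x) + nm (g k - y)" for k
    using tri[of "f k - x" "g k - y"] by (simp add: algebra_simps)
qed (rule nneg)

lemma ntends_minus:
  assumes "ntends nm f x" shows "ntends nm (\<lambda>k. - f k) (- x)"
proof -
  have "nm (- f k - - x) = nm (f k - x)" for k using neg[of "f k - x"] by simp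
  then show ?thesis using assms unfolding ntends_def by simp
qed

lemma ntends_diff:
  assumes "ntends nm f x" "ntends nm g y"
  shows "ntends nm (\<lambda>k. f k - g k) (x - y)"
  using ntends_add[OF assms(1) ntends_minus[OF assms(2)]] by simp

lemma ntends_nm:
  assumes "ntends nm f x" shows "(\<lambda>k. nm (f k)) \<longlonglongrightarrow> nm x"
proof -
  have "(\<lambda>k. \<bar>nm (f k) - nm x\<bar>) \<longlonglongrightarrow> 0"
  proof (rule squeeze0)
    show "(\<lambda>k. nm (f k - x)) \<longlonglongrightarrow> 0" using assms by (simp add: ntends_def)
    show "\<bar>nm (f k) - nm x\<bar> \<le> nm (f k - x)" for k by (rule rev_tri)
  qed simp
  then have "(\<lambda>k. nm (f k) - nm x) \<longlonglongrightarrow> 0" by (simp add: tendsto_rabs_zero_iff)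
  then show ?thesis by (simp add: LIM_zero_iff)
qed

lemma ntends_cauchy:
  assumes "ntends nm f x" shows "ncauchy nm f"
  unfolding ncauchy_def
proof (intro allI impI)
  fix e :: real assume "e > 0"
  then obtain M where M: "\<forall>k\<ge>M. nm (f k - x) < e/2"
    using assms unfolding ntends_iff by (meson half_gt_zero)
  have "nm (f i - f j) < e" if "i \<ge> M" "j \<ge> M" for i j
  proof -
    have "nm (f i - f j) \<le> nm (f i - x) + nm (f j - x)"
      using tri_diff[of "f i" "f j" x] commute[of x "f j"] by linarith
    moreover have "nm (f i - x) < e/2" "nm (f j - x) < e/2" using M that by auto
    ultimately show ?thesis by linarith
  qed
  then show "\<exists>M. \<forall>i\<ge>M. \<forall>j\<ge>M. nm (f i - f j) < e" by blast
qed

lemma ntends_zero_iff: "ntends nm f x \<longleftrightarrow> (\<lambda>k. nm (f k - x)) \<longlonglongrightarrow> 0"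
  by (simp add: ntends_def)

end


locale chilb =
  fixes H :: "('h::ab_group_add, 'b) hspace_scheme"
  assumes ch: "is_chilbert H"
begin

lemma ip_addL: "hip H (x + y) z = hip H x z + hip H y z"
  using ch unfolding is_chilbert_def by blast
lemma ip_smL: "hip H (hsm H c x) y = c * hip H x y"
  using ch unfolding is_chilbert_def by blast
lemma ip_cnj: "hip H y x = cnj (hip H x y)"
  using ch unfolding is_chilbert_def by blast
lemma ip_pos: "x \<noteq> 0 \<Longrightarrow> Re (hip H x x) > 0"
  using ch unfolding is_chilbert_def by blast
lemma complete: "ncauchy (hnorm H) f \<Longrightarrow> \<exists>x. ntends (hnorm H) f x"
  using ch unfolding is_chilbert_def by blast
lemma cvec: "cvec_space (hsm H)"
  using ch unfolding is_chilbert_def by blast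

lemma ip_addR: "hip H z (x + y) = hip H z x + hip H z y"
  using ip_cnj[of z "x + y"] ip_addL[of x y z] ip_cnj[of z x] ip_cnj[of z y] by simp
lemma ip_smR: "hip H x (hsm H c y) = cnj c * hip H x y"
  using ip_cnj[of x "hsm H c y"] ip_smL[of c y x] ip_cnj[of x y] by simp
lemma ip_0L[simp]: "hip H 0 y = 0"
  using ip_addL[of 0 0 y] by simp
lemma ip_0R[simp]: "hip H y 0 = 0"
  using ip_addR[of y 0 0] by simp
lemma ip_negL: "hip H (- x) y = - hip H x y"
  using ip_addL[of x "-x" y] add_eq_0_iff[of "hip H x y"] by simp
lemma ip_negR: "hip H y (- x) = - hip H y x"
  using ip_addR[of y x "-x"] add_eq_0_iff[of "hip H y x"] by simp
lemma ip_diffL: "hip H (x - y) z = hip H x z - hip H y z"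
  using ip_addL[of x "-y" z] ip_negL[of y z] by simp
lemma ip_diffR: "hip H z (x - y) = hip H z x - hip H z y"
  using ip_addR[of z x "-y"] ip_negR[of z y] by simp

lemma ip_self_Im: "Im (hip H x x) = 0"
  using arg_cong[OF ip_cnj[of x x], of Im] by simp

lemma ip_self_Re: "0 \<le> Re (hip H x x)"
proof (cases "x = 0")
  case True
  then have "hip H x x = 0" by simp
  then show ?thesis by simp
next
  case False then show ?thesis using ip_pos[of x] by simp
qed

lemma hnorm_sq: "(hnorm H x)\<^sup>2 = Re (hip H x x)"
  unfolding hnorm_def using ip_self_Re by simp

lemma hnorm_nonneg: "0 \<le> hnorm H x"
  unfolding hnorm_def using ip_self_Re by simp

lemma ip_self: "hip H x x = complex_of_real ((hnorm H x)\<^sup>2)"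
  by (simp add: complex_eq_iff hnorm_sq ip_self_Im)

lemma hnorm_zero: "hnorm H x = 0 \<longleftrightarrow> x = 0"
proof
  assume "hnorm H x = 0"
  then have "Re (hip H x x) = 0" using hnorm_sq[of x] by simp
  then show "x = 0" using ip_pos[of x] by (cases "x = 0") auto
qed (simp add: hnorm_def)

lemma hnorm_neg: "hnorm H (- x) = hnorm H x"
  unfolding hnorm_def using ip_negL ip_negR by simp

lemma expand: "hip H (x - y) (x - y) = hip H x x - hip H x y - hip H y x + hip H y y"
  by (simp add: ip_diffL ip_diffR)

lemma CS: "cmod (hip H x y) \<le> hnorm H x * hnorm H y"
proof (cases "y = 0")
  case True then show ?thesis by (simp add: hnorm_def)
next
  case False
  define p where "p = Re (hip H y y)"
  have p: "p > 0" using ip_pos[OF False] p_def by simp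
  have hyy: "hip H y y = complex_of_real p"
    using p_def ip_self_Im by (simp add: complex_eq_iff)
  define a where "a = hip H x y"
  have hyx: "hip H y x = cnj a" using ip_cnj[of x y] a_def by simp
  define c where "c = a / complex_of_real p"
  have aa: "cnj a * a = complex_of_real ((cmod a)\<^sup>2)"
    using complex_norm_square[of a] by (simp add: mult.commute)
  have e1: "cnj c * a = complex_of_real ((cmod a)\<^sup>2 / p)"
    unfolding c_def using aa p by (simp add: divide_simps)
  have e2: "c * cnj a = complex_of_real ((cmod a)\<^sup>2 / p)"
    unfolding c_def using aa p by (simp add: divide_simps mult.commute)
  have e3: "c * cnj c * complex_of_real p = complex_of_real ((cmod a)\<^sup>2 / p)"
    unfolding c_def using aa p by (simp add: divide_simps mult.commute)
  have "hip H (x - hsm H c y) (x - hsm H c y)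
      = hip H x x - cnj c * a - c * cnj a + c * cnj c * complex_of_real p"
    by (simp add: expand ip_smL ip_smR a_def hyx hyy)
  also have "\<dots> = hip H x x - complex_of_real ((cmod a)\<^sup>2 / p)"
    using e1 e2 e3 by simp
  finally have "0 \<le> Re (hip H x x) - (cmod a)\<^sup>2 / p"
    using ip_self_Re[of "x - hsm H c y"] by simp
  then have "(cmod a)\<^sup>2 \<le> Re (hip H x x) * p"
    using p by (simp add: field_simps)
  also have "\<dots> = (hnorm H x * hnorm H y)\<^sup>2"
    by (simp add: hnorm_sq p_def power_mult_distrib)
  finally have "(cmod a)\<^sup>2 \<le> (hnorm H x * hnorm H y)\<^sup>2" .
  then show ?thesis unfolding a_def
    by (rule power2_le_imp_le) (simp add: hnorm_nonneg)
qed

lemma hnorm_tri: "hnorm H (x + y) \<le> hnorm H x + hnorm H y"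
proof -
  have "(hnorm H (x + y))\<^sup>2 = Re (hip H x x) + Re (hip H x y) + Re (hip H y x) + Re (hip H y y)"
    by (simp add: hnorm_sq ip_addL ip_addR)
  also have "Re (hip H y x) = Re (hip H x y)" using ip_cnj[of y x] by simp
  also have "Re (hip H x y) \<le> hnorm H x * hnorm H y"
    using CS[of x y] complex_Re_le_cmod[of "hip H x y"] by linarith
  finally have "(hnorm H (x + y))\<^sup>2 \<le> (hnorm H x + hnorm H y)\<^sup>2"
    by (simp add: hnorm_sq[symmetric] power2_sum)
  then show ?thesis
    by (rule power2_le_imp_le) (simp add: hnorm_nonneg add_nonneg_nonneg)
qed

sublocale hn: gnorm "hnorm H"
  by unfold_locales (auto simp: hnorm_tri hnorm_nonneg hnorm_zero hnorm_neg)

lemma ip_cont: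
  assumes "ntends (hnorm H) f x" "ntends (hnorm H) g y"
  shows "(\<lambda>k. hip H (f k) (g k)) \<longlonglongrightarrow> hip H x y"
proof -
  have d: "hip H (f k) (g k) - hip H x y = hip H (f k - x) (g k) + hip H x (g k - y)" for k
    by (simp add: ip_diffL ip_diffR)
  have b: "cmod (hip H (f k) (g k) - hip H x y)
      \<le> hnorm H (f k - x) * hnorm H (g k) + hnorm H x * hnorm H (g k - y)" for k
    unfolding d by (rule order_trans[OF norm_triangle_ineq add_mono[OF CS CS]])
  have "(\<lambda>k. hnorm H (f k - x) * hnorm H (g k) + hnorm H x * hnorm H (g k - y))
      \<longlonglongrightarrow> 0 * hnorm H y + hnorm H x * 0"
    using assms unfolding ntends_def
    by (intro tendsto_intros hn.ntends_nm[OF assms(2)]) auto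
  then have "(\<lambda>k. cmod (hip H (f k) (g k) - hip H x y)) \<longlonglongrightarrow> 0"
    by (intro squeeze0[OF _ b]) auto
  then show ?thesis
    by (simp add: tendsto_norm_zero_iff LIM_zero_iff)
qed

lemma ext_eq:
  assumes "\<And>z. hip H a z = hip H b z" shows "a = b"
proof -
  have "hip H (a - b) (a - b) = 0" using assms by (simp add: ip_diffL)
  then show ?thesis using ip_pos[of "a - b"] by (cases "a - b = 0") auto
qed

end

lemma iso4:
  assumes "chilb H" "chilb K"
    and "hip K a1 a1 = hip H b1 b1" "hip K a1 a2 = hip H b1 b2"
    and "hip K a2 a1 = hip H b2 b1" "hip K a2 a2 = hip H b2 b2"
  shows "hnorm K (a1 - a2) = hnorm H (b1 - b2)"
  unfolding hnorm_def using chilb.expand[OF assms(1)] chilb.expand[OF assms(2)] assms(3-6)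
  by simp


lemma nclosure_seq:
  assumes "x \<in> nclosure nm (g ` S)"
  shows "\<exists>s. (\<forall>k. s k \<in> S) \<and> ntends nm (\<lambda>k. g (s k)) x"
proof -
  obtain f where f: "\<forall>k. f k \<in> g ` S" "ntends nm f x"
    using assms unfolding nclosure_def by blast
  have "\<forall>k. \<exists>t. t \<in> S \<and> f k = g t" using f(1) by blast
  then obtain s where s: "\<forall>k. s k \<in> S \<and> f k = g (s k)" by metis
  then have "(\<lambda>k. g (s k)) = f" by auto
  then show ?thesis using s f(2) by auto
qed

locale upair = H: chilb H + K: chilb K
  for H :: "('h::ab_group_add, 'b) hspace_scheme" and K :: "('k::ab_group_add, 'c) hspace_scheme" +
  fixes U :: "'h \<Rightarrow> 'k"
  assumes ipU: "\<And>x y. hip K (U x) (U y) = hip H x y"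
    and surjU: "surj U"
begin

lemma dist_U: "hnorm K (U x - U y) = hnorm H (x - y)"
  by (rule iso4) (auto simp: ipU H.chilb_axioms K.chilb_axioms)

lemma norm_U: "hnorm K (U x) = hnorm H x"
  unfolding hnorm_def by (simp add: ipU)

lemma injU: "inj U"
proof (rule injI)
  fix x y assume "U x = U y"
  then have "hnorm H (x - y) = 0" using dist_U[of x y] by simp
  then show "x = y" using H.hnorm_zero by simp
qed

lemma bijU: "bij U" using injU surjU by (simp add: bij_def)

lemma U_inv[simp]: "U (inv U y) = y" using surjU by (simp add: surj_f_inv_f)
lemma inv_U[simp]: "inv U (U x) = x" using injU by simp

lemma addU: "U (x + y) = U x + U y"
proof -
  obtain w where w: "U w = U x + U y" using surjU by (metis surjD)
  have "hip H w z = hip H (x + y) z" for z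
  proof -
    have "hip H w z = hip K (U w) (U z)" by (simp add: ipU)
    also have "\<dots> = hip K (U x) (U z) + hip K (U y) (U z)" by (simp add: w K.ip_addL)
    also have "\<dots> = hip H (x + y) z" by (simp add: ipU H.ip_addL)
    finally show ?thesis .
  qed
  then have "w = x + y" by (rule H.ext_eq)
  then show ?thesis using w by simp
qed

lemma smU: "U (hsm H c x) = hsm K c (U x)"
proof -
  obtain w where w: "U w = hsm K c (U x)" using surjU by (metis surjD)
  have "hip H w z = hip H (hsm H c x) z" for z
  proof -
    have "hip H w z = hip K (U w) (U z)" by (simp add: ipU)
    also have "\<dots> = c * hip K (U x) (U z)" by (simp add: w K.ip_smL)
    also have "\<dots> = hip H (hsm H c x) z" by (simp add: ipU H.ip_smL)
    finally show ?thesis .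
  qed
  then have "w = hsm H c x" by (rule H.ext_eq)
  then show ?thesis using w by simp
qed

lemma unitary: "unitary_map H K U"
  unfolding unitary_map_def using bijU addU smU ipU by blast

lemma U_tends: "ntends (hnorm H) f x \<Longrightarrow> ntends (hnorm K) (\<lambda>k. U (f k)) (U x)"
  unfolding ntends_def by (simp add: dist_U)

lemma invU_tends:
  assumes "ntends (hnorm K) f y" shows "ntends (hnorm H) (\<lambda>k. inv U (f k)) (inv U y)"
proof -
  have "hnorm H (inv U (f k) - inv U y) = hnorm K (f k - y)" for k
    using dist_U[of "inv U (f k)" "inv U y"] by simp
  then show ?thesis using assms unfolding ntends_def by simp
qed

end

lemma unitary_ext:
  fixes H :: "('h::ab_group_add, 'b) hspace_scheme" and K :: "('k::ab_group_add, 'c) hspace_scheme"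
  assumes cH: "chilb H" and cK: "chilb K"
    and ip: "\<And>s t. s \<in> S \<Longrightarrow> t \<in> S \<Longrightarrow> hip K (\<beta> s) (\<beta> t) = hip H (\<alpha> s) (\<alpha> t)"
    and dH: "nclosure (hnorm H) (\<alpha> ` S) = UNIV" and dK: "nclosure (hnorm K) (\<beta> ` S) = UNIV"
  shows "\<exists>U. upair H K U \<and> (\<forall>s\<in>S. U (\<alpha> s) = \<beta> s)"
proof -
  interpret H: chilb H by (rule cH)
  interpret K: chilb K by (rule cK)
  have d: "hnorm K (\<beta> s - \<beta> t) = hnorm H (\<alpha> s - \<alpha> t)" if "s \<in> S" "t \<in> S" for s t
    by (rule iso4[OF cH cK]) (auto simp: ip that)
  define R where "R x y \<longleftrightarrow> (\<exists>s. (\<forall>n. s n \<in> S) \<and> ntends (hnorm H) (\<lambda>n. \<alpha> (s n)) x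
      \<and> ntends (hnorm K) (\<lambda>n. \<beta> (s n)) y)" for x y
  have ex: "\<exists>y. R x y" for x
  proof -
    obtain s where s: "\<forall>n. s n \<in> S" "ntends (hnorm H) (\<lambda>n. \<alpha> (s n)) x"
      using nclosure_seq[of x "hnorm H" \<alpha> S] dH by auto
    have "ncauchy (hnorm H) (\<lambda>n. \<alpha> (s n))" using H.hn.ntends_cauchy[OF s(2)] .
    then have "ncauchy (hnorm K) (\<lambda>n. \<beta> (s n))"
      unfolding ncauchy_def using d s(1) by simp
    then obtain y where "ntends (hnorm K) (\<lambda>n. \<beta> (s n)) y" using K.complete by blast
    then show ?thesis unfolding R_def using s by blast
  qed
  have un: "y = y'" if r1: "R x y" and r2: "R x y'" for x y y'
  proof -
    obtain s where s: "\<forall>n. s n \<in> S" "ntends (hnorm H) (\<lambda>n. \<alpha> (s n)) x"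
      "ntends (hnorm K) (\<lambda>n. \<beta> (s n)) y" using r1 unfolding R_def by blast
    obtain t where t: "\<forall>n. t n \<in> S" "ntends (hnorm H) (\<lambda>n. \<alpha> (t n)) x"
      "ntends (hnorm K) (\<lambda>n. \<beta> (t n)) y'" using r2 unfolding R_def by blast
    have "ntends (hnorm H) (\<lambda>n. \<alpha> (t n) - \<alpha> (s n)) (x - x)"
      by (rule H.hn.ntends_diff[OF t(2) s(2)])
    then have "(\<lambda>n. hnorm H (\<alpha> (t n) - \<alpha> (s n))) \<longlonglongrightarrow> 0" by (simp add: ntends_def)
    then have "(\<lambda>n. hnorm K (\<beta> (t n) - \<beta> (s n))) \<longlonglongrightarrow> 0" using d s(1) t(1) by simp
    then have "ntends (hnorm K) (\<lambda>n. \<beta> (t n)) y" by (rule K.hn.ntends_cong0[OF s(3)])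
    then show ?thesis using t(3) K.hn.ntends_unique by blast
  qed
  define U where "U x = (THE y. R x y)" for x
  have RU: "R x (U x)" for x
    unfolding U_def using ex un by (metis theI)
  have Ua: "U (\<alpha> s) = \<beta> s" if "s \<in> S" for s
  proof -
    have "R (\<alpha> s) (\<beta> s)" unfolding R_def
      by (rule exI[of _ "\<lambda>n. s"]) (simp add: that H.hn.ntends_const K.hn.ntends_const)
    then show ?thesis using un RU by blast
  qed
  have ipU: "hip K (U x) (U y) = hip H x y" for x y
  proof -
    obtain s where s: "\<forall>n. s n \<in> S" "ntends (hnorm H) (\<lambda>n. \<alpha> (s n)) x"
      "ntends (hnorm K) (\<lambda>n. \<beta> (s n)) (U x)" using RU[of x] unfolding R_def by blast
    obtain t where t: "\<forall>n. t n \<in> S" "ntends (hnorm H) (\<lambda>n. \<alpha> (t n)) y"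
      "ntends (hnorm K) (\<lambda>n. \<beta> (t n)) (U y)" using RU[of y] unfolding R_def by blast
    have "(\<lambda>n. hip K (\<beta> (s n)) (\<beta> (t n))) \<longlonglongrightarrow> hip K (U x) (U y)"
      by (rule K.ip_cont[OF s(3) t(3)])
    moreover have "(\<lambda>n. hip K (\<beta> (s n)) (\<beta> (t n))) \<longlonglongrightarrow> hip H x y"
      using H.ip_cont[OF s(2) t(2)] ip s(1) t(1) by simp
    ultimately show ?thesis by (rule LIMSEQ_unique)
  qed
  have surj: "surj U"
  proof -
    have "y \<in> range U" for y
    proof -
      obtain t where t: "\<forall>n. t n \<in> S" "ntends (hnorm K) (\<lambda>n. \<beta> (t n)) y"
        using nclosure_seq[of y "hnorm K" \<beta> S] dK by auto
      have "ncauchy (hnorm K) (\<lambda>n. \<beta> (t n))" using K.hn.ntends_cauchy[OF t(2)] .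
      then have "ncauchy (hnorm H) (\<lambda>n. \<alpha> (t n))"
        unfolding ncauchy_def using d t(1) by simp
      then obtain x where "ntends (hnorm H) (\<lambda>n. \<alpha> (t n)) x" using H.complete by blast
      then have "R x y" unfolding R_def using t by blast
      then have "U x = y" using un RU by blast
      then show ?thesis by blast
    qed
    then show ?thesis by blast
  qed
  have "upair H K U"
    by (intro upair.intro upair_axioms.intro cH cK ipU surj)
  then show ?thesis using Ua by blast
qed


locale setting =
  fixes D :: "'a::ab_group_add cq_data" and \<omega> :: "'a \<Rightarrow> complex"
    and H :: "'h::ab_group_add hspace" and lamw :: "'a \<Rightarrow> 'h" and piw :: "'a \<Rightarrow> 'h \<Rightarrow> 'h"
    and K :: "'k::ab_group_add hspace" and lamb :: "'a \<Rightarrow> 'k" and pib :: "'a \<Rightarrow> 'k \<Rightarrow> 'k"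
  assumes cq: "CQ_setting D" and pf: "pos_functional D \<omega>"
    and g0: "is_GNS0 D \<omega> H lamw piw" and g1: "is_GNS1 D \<omega> K lamb pib"
begin

abbreviation "mul \<equiv> mulA D"
abbreviation "iv \<equiv> invA D"
abbreviation "nA' \<equiv> nA D"
abbreviation "n0 \<equiv> n0A D"
abbreviation "sm \<equiv> smA D"
abbreviation "Z0 \<equiv> A0 D"

lemmas cqu = cq[unfolded CQ_setting_def cvec_space_def norm_on_def csubspace_def]

lemma sm_addS: "sm (a + b) x = sm a x + sm b x" using cqu by simp
lemma nA_tri: "nA' (x + y) \<le> nA' x + nA' y" using cqu by simp
lemma nA_sm: "nA' (sm c x) = cmod c * nA' x" using cqu by simp
lemma nA_nneg: "0 \<le> nA' x" using cqu by simp
lemma nA_zero: "nA' x = 0 \<longleftrightarrow> x = 0" using cqu by simp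
lemma nA_complete: "ncauchy nA' f \<Longrightarrow> \<exists>x. ntends nA' f x" using cqu by simp
lemma Z0_0: "0 \<in> Z0" using cqu by simp
lemma Z0_add: "a \<in> Z0 \<Longrightarrow> b \<in> Z0 \<Longrightarrow> a + b \<in> Z0" using cqu by simp
lemma Z0_sm: "a \<in> Z0 \<Longrightarrow> sm c a \<in> Z0" using cqu by simp
lemma mul_closed: "a \<in> Z0 \<Longrightarrow> b \<in> Z0 \<Longrightarrow> mul a b \<in> Z0" using cqu by simp
lemma iv_closed: "a \<in> Z0 \<Longrightarrow> iv a \<in> Z0" using cqu by simp
lemma assoc: "a \<in> Z0 \<Longrightarrow> b \<in> Z0 \<Longrightarrow> c \<in> Z0 \<Longrightarrow> mul (mul a b) c = mul a (mul b c)"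
  using cqu by simp
lemma distR: "a \<in> Z0 \<Longrightarrow> b \<in> Z0 \<Longrightarrow> c \<in> Z0 \<Longrightarrow> mul a (b + c) = mul a b + mul a c"
  using cqu by simp
lemma distL: "a \<in> Z0 \<Longrightarrow> b \<in> Z0 \<Longrightarrow> c \<in> Z0 \<Longrightarrow> mul (a + b) c = mul a c + mul b c"
  using cqu by simp
lemma iv_add: "iv (x + y) = iv x + iv y" using cqu by simp
lemma iv_iv: "iv (iv x) = x" using cqu by simp
lemma iv_mul: "a \<in> Z0 \<Longrightarrow> b \<in> Z0 \<Longrightarrow> iv (mul a b) = mul (iv b) (iv a)" using cqu by simp
lemma n0_tri: "a \<in> Z0 \<Longrightarrow> b \<in> Z0 \<Longrightarrow> n0 (a + b) \<le> n0 a + n0 b" using cqu by simp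
lemma n0_sm: "a \<in> Z0 \<Longrightarrow> n0 (sm c a) = cmod c * n0 a" using cqu by simp
lemma n0_nneg: "a \<in> Z0 \<Longrightarrow> 0 \<le> n0 a" using cqu by simp
lemma n0_zero: "a \<in> Z0 \<Longrightarrow> n0 a = 0 \<longleftrightarrow> a = 0" using cqu by simp
lemma n0_mul: "a \<in> Z0 \<Longrightarrow> b \<in> Z0 \<Longrightarrow> n0 (mul a b) \<le> n0 a * n0 b" using cqu by simp
lemma n0_cstar: "a \<in> Z0 \<Longrightarrow> n0 (mul (iv a) a) = (n0 a)\<^sup>2" using cqu by simp
lemma nA_mul: "a \<in> Z0 \<Longrightarrow> b \<in> Z0 \<Longrightarrow> nA' (mul a b) \<le> nA' a * n0 b" using cqu by simp
lemma nA_iv: "nA' (iv x) = nA' x" using cqu by simp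
lemma dense0: "nclosure nA' Z0 = UNIV" using cqu by simp

lemma sm0: "sm 0 x = 0"
  using sm_addS[of 0 0 x] by simp
lemma smneg: "sm (-1) x = - x"
  using sm_addS[of 1 "-1" x] sm0[of x] cqu by (simp add: add_eq_0_iff)

lemma nA_neg: "nA' (- x) = nA' x"
  using nA_sm[of "-1" x] smneg[of x] by simp

sublocale nAg: gnorm nA'
  by unfold_locales (auto simp: nA_tri nA_nneg nA_zero nA_neg)

lemma Z0_neg: "a \<in> Z0 \<Longrightarrow> - a \<in> Z0"
  using Z0_sm[of a "-1"] smneg by simp
lemma Z0_diff: "a \<in> Z0 \<Longrightarrow> b \<in> Z0 \<Longrightarrow> a - b \<in> Z0"
  using Z0_add[OF _ Z0_neg, of a b] by simp

lemma mul_diffR: "a \<in> Z0 \<Longrightarrow> b \<in> Z0 \<Longrightarrow> c \<in> Z0 \<Longrightarrow> mul a (b - c) = mul a b - mul a c"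
  using distR[of a "b - c" c] Z0_diff by (simp add: eq_diff_eq)
lemma mul_diffL: "a \<in> Z0 \<Longrightarrow> b \<in> Z0 \<Longrightarrow> c \<in> Z0 \<Longrightarrow> mul (a - b) c = mul a c - mul b c"
  using distL[of "a - b" b c] Z0_diff by (simp add: eq_diff_eq)

lemma iv_0: "iv 0 = 0" using iv_add[of 0 0] by simp
lemma iv_neg: "iv (- x) = - iv x"
  using iv_add[of x "-x"] iv_0 by (simp add: add_eq_0_iff)
lemma iv_diff: "iv (x - y) = iv x - iv y"
  using iv_add[of x "-y"] iv_neg[of y] by simp

lemma n0_le_iv: "a \<in> Z0 \<Longrightarrow> n0 a \<le> n0 (iv a)"
proof -
  assume a: "a \<in> Z0"
  show ?thesis
  proof (cases "n0 a = 0")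
    case True then show ?thesis using n0_nneg[OF iv_closed[OF a]] by simp
  next
    case False
    then have p: "n0 a > 0" using n0_nneg[OF a] by simp
    have "(n0 a)\<^sup>2 \<le> n0 (iv a) * n0 a"
      using n0_cstar[OF a] n0_mul[OF iv_closed[OF a] a] by simp
    then show ?thesis using p by (simp add: power2_eq_square)
  qed
qed

lemma n0_iv: "a \<in> Z0 \<Longrightarrow> n0 (iv a) = n0 a"
  using n0_le_iv[of a] n0_le_iv[of "iv a"] iv_closed[of a] iv_iv[of a] by simp

lemma nA_mul2: "a \<in> Z0 \<Longrightarrow> b \<in> Z0 \<Longrightarrow> nA' (mul a b) \<le> n0 a * nA' b"
proof -
  assume a: "a \<in> Z0" and b: "b \<in> Z0"
  have "nA' (mul a b) = nA' (mul (iv b) (iv a))" using nA_iv iv_mul[OF a b] by metis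
  also have "\<dots> \<le> nA' (iv b) * n0 (iv a)" using nA_mul iv_closed a b by blast
  also have "\<dots> = n0 a * nA' b" using nA_iv n0_iv[OF a] by simp
  finally show ?thesis .
qed

lemma n0_neg: "a \<in> Z0 \<Longrightarrow> n0 (- a) = n0 a"
  using n0_sm[of a "-1"] smneg[of a] by simp

lemma n0_diff: "a \<in> Z0 \<Longrightarrow> b \<in> Z0 \<Longrightarrow> n0 (a - b) \<le> n0 a + n0 b"
  using n0_tri[of a "-b"] n0_neg[of b] Z0_neg[of b] by simp

end


lemma cauchy_comb:
  assumes f: "ncauchy nm1 f" and g: "ncauchy nm1 g" and C: "0 \<le> C"
    and b: "\<And>i j. nm2 (h i - h j) \<le> C * (nm1 (f i - f j) + nm1 (g i - g j))"
  shows "ncauchy nm2 h"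
  unfolding ncauchy_def
proof (intro allI impI)
  fix e :: real assume e: "e > 0"
  define e' where "e' = e / (2 * (C + 1))"
  have e': "e' > 0" using e C by (simp add: e'_def)
  obtain M1 where M1: "\<forall>i\<ge>M1. \<forall>j\<ge>M1. nm1 (f i - f j) < e'" using f e' unfolding ncauchy_def by blast
  obtain M2 where M2: "\<forall>i\<ge>M2. \<forall>j\<ge>M2. nm1 (g i - g j) < e'" using g e' unfolding ncauchy_def by blast
  have "nm2 (h i - h j) < e" if "i \<ge> max M1 M2" "j \<ge> max M1 M2" for i j
  proof -
    have s: "nm1 (f i - f j) + nm1 (g i - g j) \<le> 2 * e'" using M1 M2 that by force
    have "nm2 (h i - h j) \<le> C * (2 * e')" using b[of i j] mult_left_mono[OF s C] by linarith
    also have "C * (2 * e') = C * e / (C + 1)" using C by (simp add: e'_def field_simps)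
    also have "\<dots> < e" using C e by (simp add: field_simps)
    finally show ?thesis .
  qed
  then show "\<exists>M. \<forall>i\<ge>M. \<forall>j\<ge>M. nm2 (h i - h j) < e" by blast
qed

context setting
begin

lemmas pfu = pf[unfolded pos_functional_def]
lemma w_add: "a \<in> Z0 \<Longrightarrow> b \<in> Z0 \<Longrightarrow> \<omega> (a + b) = \<omega> a + \<omega> b" using pfu by simp
lemma w_sm: "a \<in> Z0 \<Longrightarrow> \<omega> (sm z a) = z * \<omega> a" using pfu by simp

definition gam where "gam = (SOME g. 0 \<le> g \<and> (\<forall>a\<in>Z0. cmod (\<omega> a) \<le> g * nA' a))"

lemma gam: "0 \<le> gam" "a \<in> Z0 \<Longrightarrow> cmod (\<omega> a) \<le> gam * nA' a"
proof -
  obtain g where g: "\<forall>a\<in>Z0. cmod (\<omega> a) \<le> g * nA' a" using pfu by blast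
  have "\<forall>a\<in>Z0. cmod (\<omega> a) \<le> max g 0 * nA' a"
  proof
    fix a assume "a \<in> Z0"
    then have "cmod (\<omega> a) \<le> g * nA' a" using g by blast
    also have "\<dots> \<le> max g 0 * nA' a" by (rule mult_right_mono) (auto simp: nA_nneg)
    finally show "cmod (\<omega> a) \<le> max g 0 * nA' a" .
  qed
  then have "\<exists>g. 0 \<le> g \<and> (\<forall>a\<in>Z0. cmod (\<omega> a) \<le> g * nA' a)" by (intro exI[of _ "max g 0"]) auto
  then have "0 \<le> gam \<and> (\<forall>a\<in>Z0. cmod (\<omega> a) \<le> gam * nA' a)"
    unfolding gam_def by (rule someI_ex)
  then show "0 \<le> gam" "a \<in> Z0 \<Longrightarrow> cmod (\<omega> a) \<le> gam * nA' a" by auto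
qed

lemma w_neg: "a \<in> Z0 \<Longrightarrow> \<omega> (- a) = - \<omega> a"
  using w_sm[of a "-1"] smneg[of a] by simp
lemma w_diff: "a \<in> Z0 \<Longrightarrow> b \<in> Z0 \<Longrightarrow> \<omega> (a - b) = \<omega> a - \<omega> b"
  using w_add[of a "-b"] w_neg[of b] Z0_neg[of b] by simp

lemmas g0u = g0[unfolded is_GNS0_def]
lemmas g1u = g1[unfolded is_GNS1_def]

sublocale Hs: chilb H using g0u by (simp add: chilb_def)
sublocale Ks: chilb K using g1u by (simp add: chilb_def)

lemma lw_add: "a \<in> Z0 \<Longrightarrow> b \<in> Z0 \<Longrightarrow> lamw (a + b) = lamw a + lamw b" using g0u by simp
lemma lw_dense: "nclosure (hnorm H) (lamw ` Z0) = UNIV" using g0u by simp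
lemma lw_ip: "a \<in> Z0 \<Longrightarrow> b \<in> Z0 \<Longrightarrow> hip H (lamw a) (lamw b) = \<omega> (mul (iv b) a)" using g0u by simp
lemma piw_bdd: "a \<in> Z0 \<Longrightarrow> bounded_op H (piw a)" using g0u by simp
lemma piw_lw: "a \<in> Z0 \<Longrightarrow> b \<in> Z0 \<Longrightarrow> piw a (lamw b) = lamw (mul a b)" using g0u by simp

lemma lb_dense: "nclosure (hnorm K) (lamb ` A1 D) = UNIV" using g1u by simp
lemma lb_ip: "X \<in> A1 D \<Longrightarrow> Y \<in> A1 D \<Longrightarrow> hip K (lamb X) (lamb Y) = omegabar D \<omega> (prod1 D (iv Y) X)"
  using g1u by simp
lemma pib_lb: "X \<in> A1 D \<Longrightarrow> Y \<in> A1 D \<Longrightarrow> pib X (lamb Y) = lamb (prod1 D X Y)" using g1u by simp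

lemma lw_0: "lamw 0 = 0" using lw_add[OF Z0_0 Z0_0] by simp
lemma lw_neg: "a \<in> Z0 \<Longrightarrow> lamw (- a) = - lamw a"
  using lw_add[of a "-a"] Z0_neg[of a] lw_0 by (simp add: add_eq_0_iff)
lemma lw_diff: "a \<in> Z0 \<Longrightarrow> b \<in> Z0 \<Longrightarrow> lamw (a - b) = lamw a - lamw b"
  using lw_add[of a "-b"] lw_neg[of b] Z0_neg[of b] by simp

lemma A0N_iff: "a \<in> A0N D N \<longleftrightarrow> a \<in> Z0 \<and> n0 a \<le> real N"
  by (simp add: A0N_def)

lemma A0N_mono: "N \<le> M \<Longrightarrow> a \<in> A0N D N \<Longrightarrow> a \<in> A0N D M"
  by (auto simp: A0N_iff)

lemma Z0_A0N: "a \<in> Z0 \<Longrightarrow> a \<in> A0N D (nat \<lceil>n0 a\<rceil>)"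
  by (simp add: A0N_iff) linarith

definition bapprox where "bapprox N f X \<longleftrightarrow> (\<forall>k. f k \<in> A0N D N) \<and> ntends nA' f X"

lemma A1_iff: "X \<in> A1 D \<longleftrightarrow> (\<exists>N f. bapprox N f X)"
  by (auto simp: A1_def nclosure_def bapprox_def)

lemma bapprox_mono: "N \<le> M \<Longrightarrow> bapprox N f X \<Longrightarrow> bapprox M f X"
  by (auto simp: bapprox_def intro: A0N_mono)

lemma bapprox_const: "a \<in> A0N D N \<Longrightarrow> bapprox N (\<lambda>k. a) a"
  by (simp add: bapprox_def nAg.ntends_const)

lemma bapprox_Z0: "bapprox N f X \<Longrightarrow> f k \<in> Z0"
  by (simp add: bapprox_def A0N_iff)
lemma bapprox_n0: "bapprox N f X \<Longrightarrow> n0 (f k) \<le> real N"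
  by (simp add: bapprox_def A0N_iff)
lemma bapprox_A1: "bapprox N f X \<Longrightarrow> X \<in> A1 D"
  using A1_iff by blast

lemma Z0_A1: "a \<in> Z0 \<Longrightarrow> a \<in> A1 D"
  using bapprox_A1[OF bapprox_const[OF Z0_A0N]] by blast

lemma est: "a \<in> Z0 \<Longrightarrow> b \<in> Z0 \<Longrightarrow> a' \<in> Z0 \<Longrightarrow> b' \<in> Z0 \<Longrightarrow>
  nA' (mul a b - mul a' b') \<le> n0 a * nA' (b - b') + nA' (a - a') * n0 b'"
proof -
  assume Z: "a \<in> Z0" "b \<in> Z0" "a' \<in> Z0" "b' \<in> Z0"
  have e: "mul a b - mul a' b' = mul a (b - b') + mul (a - a') b'"
    using mul_diffR[of a b b'] mul_diffL[of a a' b'] Z by simp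
  have "nA' (mul a b - mul a' b') \<le> nA' (mul a (b - b')) + nA' (mul (a - a') b')"
    unfolding e by (rule nA_tri)
  also have "\<dots> \<le> n0 a * nA' (b - b') + nA' (a - a') * n0 b'"
    using nA_mul2[of a "b - b'"] nA_mul[of "a - a'" b'] Z Z0_diff by (meson add_mono)
  finally show ?thesis .
qed

lemma est_N: "bapprox N f X \<Longrightarrow> bapprox N g Y \<Longrightarrow> bapprox M f' X' \<Longrightarrow> bapprox M g' Y' \<Longrightarrow>
  nA' (mul (f i) (g i) - mul (f' j) (g' j)) \<le> real N * nA' (g i - g' j) + nA' (f i - f' j) * real M"
proof -
  assume a: "bapprox N f X" "bapprox N g Y" "bapprox M f' X'" "bapprox M g' Y'"
  have "nA' (mul (f i) (g i) - mul (f' j) (g' j)) \<le> n0 (f i) * nA' (g i - g' j) + nA' (f i - f' j) * n0 (g' j)"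
    using est bapprox_Z0 a by blast
  also have "\<dots> \<le> real N * nA' (g i - g' j) + nA' (f i - f' j) * real M"
    using bapprox_n0[OF a(1)] bapprox_n0[OF a(4)] nA_nneg
    by (intro add_mono mult_right_mono mult_left_mono) auto
  finally show ?thesis .
qed

lemma prod_lim:
  assumes f: "bapprox N f X" and g: "bapprox N g Y"
  shows "ntends nA' (\<lambda>k. mul (f k) (g k)) (prod1 D X Y)"
proof -
  have "ncauchy nA' (\<lambda>k. mul (f k) (g k))"
  proof (rule cauchy_comb[of nA' f g "real N"])
    show "ncauchy nA' f" using f nAg.ntends_cauchy by (auto simp: bapprox_def)
    show "ncauchy nA' g" using g nAg.ntends_cauchy by (auto simp: bapprox_def)
    show "nA' (mul (f i) (g i) - mul (f j) (g j)) \<le> real N * (nA' (f i - f j) + nA' (g i - g j))" for i j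
      using est_N[OF f g f g, of i j] by (simp add: algebra_simps)
  qed simp
  then obtain Z where Z: "ntends nA' (\<lambda>k. mul (f k) (g k)) Z" using nA_complete by blast
  have "prod1 D X Y = Z"
    unfolding prod1_def
  proof (rule the_equality)
    show "\<exists>N f g. (\<forall>k. f k \<in> A0N D N \<and> g k \<in> A0N D N) \<and> ntends nA' f X \<and> ntends nA' g Y
      \<and> ntends nA' (\<lambda>k. mul (f k) (g k)) Z"
      using f g Z unfolding bapprox_def by blast
  next
    fix Z' assume "\<exists>N f g. (\<forall>k. f k \<in> A0N D N \<and> g k \<in> A0N D N) \<and> ntends nA' f X \<and> ntends nA' g Y
      \<and> ntends nA' (\<lambda>k. mul (f k) (g k)) Z'"
    then obtain M f' g' where f': "bapprox M f' X" and g': "bapprox M g' Y"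
      and Z': "ntends nA' (\<lambda>k. mul (f' k) (g' k)) Z'"
      unfolding bapprox_def by blast
    have t1: "(\<lambda>k. nA' (g' k - g k)) \<longlonglongrightarrow> 0"
      using nAg.ntends_diff[of g' Y g Y] f g f' g' by (simp add: bapprox_def ntends_def)
    have t2: "(\<lambda>k. nA' (f' k - f k)) \<longlonglongrightarrow> 0"
      using nAg.ntends_diff[of f' X f X] f g f' g' by (simp add: bapprox_def ntends_def)
    have "(\<lambda>k. nA' (mul (f' k) (g' k) - mul (f k) (g k))) \<longlonglongrightarrow> 0"
    proof (rule squeeze0)
      show "(\<lambda>k. real M * nA' (g' k - g k) + nA' (f' k - f k) * real N) \<longlonglongrightarrow> 0"
        using tendsto_add[OF tendsto_mult_right_zero[OF t1] tendsto_mult_left_zero[OF t2]] by simp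
      show "nA' (mul (f' k) (g' k) - mul (f k) (g k)) \<le> real M * nA' (g' k - g k) + nA' (f' k - f k) * real N" for k
        by (rule est_N[OF f' g' f g])
    qed (rule nA_nneg)
    then have "ntends nA' (\<lambda>k. mul (f' k) (g' k)) Z" by (rule nAg.ntends_cong0[OF Z])
    then show "Z' = Z" using Z' nAg.ntends_unique by blast
  qed
  then show ?thesis using Z by simp
qed

lemma omegabar_lim:
  assumes fZ: "\<And>k. f k \<in> Z0" and f: "ntends nA' f X"
  shows "(\<lambda>k. \<omega> (f k)) \<longlonglongrightarrow> omegabar D \<omega> X"
proof -
  have d: "cmod (\<omega> (f i) - \<omega> (f' j)) \<le> gam * nA' (f i - f' j)" if "\<And>k. f' k \<in> Z0" for f' :: "nat \<Rightarrow> 'a" and i j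
    using gam(2)[of "f i - f' j"] w_diff[of "f i" "f' j"] fZ that Z0_diff by simp
  have "Cauchy (\<lambda>k. \<omega> (f k))"
    unfolding Cauchy_def dist_norm
  proof (intro allI impI)
    fix e :: real assume e: "e > 0"
    have e': "e / (gam + 1) > 0" using e gam(1) by simp
    obtain M where M: "\<forall>i\<ge>M. \<forall>j\<ge>M. nA' (f i - f j) < e / (gam + 1)"
      using nAg.ntends_cauchy[OF f] e' unfolding ncauchy_def by blast
    have "cmod (\<omega> (f i) - \<omega> (f j)) < e" if "i \<ge> M" "j \<ge> M" for i j
    proof -
      have "cmod (\<omega> (f i) - \<omega> (f j)) \<le> gam * nA' (f i - f j)" using d[of f i j] fZ by blast
      also have "\<dots> \<le> gam * (e / (gam + 1))"
        using M that gam(1) by (intro mult_left_mono) (auto intro: less_imp_le)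
      also have "\<dots> < e" using gam(1) e by (simp add: field_simps)
      finally show ?thesis .
    qed
    then show "\<exists>M. \<forall>m\<ge>M. \<forall>n\<ge>M. cmod (\<omega> (f m) - \<omega> (f n)) < e" by blast
  qed
  then obtain c where c: "(\<lambda>k. \<omega> (f k)) \<longlonglongrightarrow> c"
    using Cauchy_convergent_iff convergent_def by blast
  have "omegabar D \<omega> X = c"
    unfolding omegabar_def
  proof (rule the_equality)
    show "\<exists>f. (\<forall>k. f k \<in> Z0) \<and> ntends nA' f X \<and> (\<lambda>k. \<omega> (f k)) \<longlonglongrightarrow> c"
      using fZ f c by blast
  next
    fix c' assume "\<exists>f. (\<forall>k. f k \<in> Z0) \<and> ntends nA' f X \<and> (\<lambda>k. \<omega> (f k)) \<longlonglongrightarrow> c'"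
    then obtain f' where f'Z: "\<forall>k. f' k \<in> Z0" and f': "ntends nA' f' X"
      and c': "(\<lambda>k. \<omega> (f' k)) \<longlonglongrightarrow> c'" by blast
    have t: "(\<lambda>k. nA' (f k - f' k)) \<longlonglongrightarrow> 0"
      using nAg.ntends_diff[OF f f'] by (simp add: ntends_def)
    have "(\<lambda>k. cmod (\<omega> (f k) - \<omega> (f' k))) \<longlonglongrightarrow> 0"
    proof (rule squeeze0)
      show "(\<lambda>k. gam * nA' (f k - f' k)) \<longlonglongrightarrow> 0"
        using tendsto_mult_right_zero[OF t] by simp
      show "cmod (\<omega> (f k) - \<omega> (f' k)) \<le> gam * nA' (f k - f' k)" for k using d f'Z by blast
    qed simp
    then have "(\<lambda>k. \<omega> (f k) - \<omega> (f' k)) \<longlonglongrightarrow> 0" by (simp add: tendsto_norm_zero_iff)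
    moreover have "(\<lambda>k. \<omega> (f k) - \<omega> (f' k)) \<longlonglongrightarrow> c - c'" by (rule tendsto_diff[OF c c'])
    ultimately have "c - c' = 0" using LIMSEQ_unique by blast
    then show "c' = c" by simp
  qed
  then show ?thesis using c by simp
qed

end


context setting
begin

lemma lw_sq: "c \<in> Z0 \<Longrightarrow> (hnorm H (lamw c))\<^sup>2 \<le> gam * nA' c * n0 c"
proof -
  assume c: "c \<in> Z0"
  have "(hnorm H (lamw c))\<^sup>2 = Re (\<omega> (mul (iv c) c))" using Hs.hnorm_sq lw_ip[OF c c] by simp
  also have "\<dots> \<le> cmod (\<omega> (mul (iv c) c))" by (rule complex_Re_le_cmod)
  also have "\<dots> \<le> gam * nA' (mul (iv c) c)" using gam(2) mul_closed iv_closed c by blast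
  also have "\<dots> \<le> gam * (nA' c * n0 c)"
    using nA_mul[OF iv_closed[OF c] c] nA_iv[of c] gam(1) by (simp add: mult_left_mono)
  finally show ?thesis by (simp add: mult.assoc)
qed

lemma lw_cauchy:
  assumes fN: "\<And>k. f k \<in> A0N D N" and fc: "ncauchy nA' f"
  shows "ncauchy (hnorm H) (\<lambda>k. lamw (f k))"
  unfolding ncauchy_def
proof (intro allI impI)
  fix e :: real assume e: "e > 0"
  define C where "C = gam * (2 * real N)"
  have C: "0 \<le> C" using gam(1) by (simp add: C_def)
  have e': "e\<^sup>2 / (C + 1) > 0" using e C by simp
  obtain M where M: "\<forall>i\<ge>M. \<forall>j\<ge>M. nA' (f i - f j) < e\<^sup>2 / (C + 1)"
    using fc e' unfolding ncauchy_def by blast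
  have "hnorm H (lamw (f i) - lamw (f j)) < e" if "i \<ge> M" "j \<ge> M" for i j
  proof -
    have Z: "f i \<in> Z0" "f j \<in> Z0" "n0 (f i) \<le> real N" "n0 (f j) \<le> real N" using fN by (auto simp: A0N_iff)
    have n0d: "n0 (f i - f j) \<le> 2 * real N" using n0_diff[of "f i" "f j"] Z by simp
    have "(hnorm H (lamw (f i) - lamw (f j)))\<^sup>2 = (hnorm H (lamw (f i - f j)))\<^sup>2"
      using lw_diff Z by simp
    also have "\<dots> \<le> gam * nA' (f i - f j) * n0 (f i - f j)" using lw_sq Z0_diff Z by blast
    also have "\<dots> \<le> gam * nA' (f i - f j) * (2 * real N)"
      using n0d gam(1) nA_nneg by (intro mult_left_mono) auto
    also have "\<dots> = C * nA' (f i - f j)" by (simp add: C_def)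
    also have "\<dots> \<le> C * (e\<^sup>2 / (C + 1))" using M that C by (intro mult_left_mono) (auto intro: less_imp_le)
    also have "\<dots> < e\<^sup>2" using C e by (simp add: field_simps)
    finally have "(hnorm H (lamw (f i) - lamw (f j)))\<^sup>2 < e\<^sup>2" .
    then show ?thesis using e by (simp add: power_less_imp_less_base less_imp_le)
  qed
  then show "\<exists>M. \<forall>i\<ge>M. \<forall>j\<ge>M. hnorm H (lamw (f i) - lamw (f j)) < e" by blast
qed

lemma lw_conv: "bapprox N f X \<Longrightarrow> \<exists>v. ntends (hnorm H) (\<lambda>k. lamw (f k)) v"
  using lw_cauchy[of f N] Hs.complete nAg.ntends_cauchy by (auto simp: bapprox_def)

lemma bapprox_iv: "bapprox N g Y \<Longrightarrow> bapprox N (\<lambda>k. iv (g k)) (iv Y)"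
proof -
  assume g: "bapprox N g Y"
  have "iv (g k) \<in> A0N D N" for k using g n0_iv iv_closed by (auto simp: bapprox_def A0N_iff)
  moreover have "ntends nA' (\<lambda>k. iv (g k)) (iv Y)"
    using g by (simp add: bapprox_def ntends_def iv_diff[symmetric] nA_iv)
  ultimately show ?thesis by (simp add: bapprox_def)
qed

lemma HF:
  assumes f: "bapprox N f X" and g: "bapprox N g Y"
  shows "(\<lambda>k. hip H (lamw (f k)) (lamw (g k))) \<longlonglongrightarrow> hip K (lamb X) (lamb Y)"
proof -
  have p: "ntends nA' (\<lambda>k. mul (iv (g k)) (f k)) (prod1 D (iv Y) X)"
    by (rule prod_lim[OF bapprox_iv[OF g] f])
  have "(\<lambda>k. \<omega> (mul (iv (g k)) (f k))) \<longlonglongrightarrow> omegabar D \<omega> (prod1 D (iv Y) X)"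
    by (rule omegabar_lim[OF _ p]) (use f g bapprox_Z0 mul_closed iv_closed in blast)
  moreover have "hip H (lamw (f k)) (lamw (g k)) = \<omega> (mul (iv (g k)) (f k))" for k
    using lw_ip f g bapprox_Z0 by blast
  moreover have "hip K (lamb X) (lamb Y) = omegabar D \<omega> (prod1 D (iv Y) X)"
    using lb_ip bapprox_A1 f g by blast
  ultimately show ?thesis by simp
qed

lemma HFv:
  assumes f: "bapprox N f X" and g: "bapprox N g Y"
    and v: "ntends (hnorm H) (\<lambda>k. lamw (f k)) v" and w: "ntends (hnorm H) (\<lambda>k. lamw (g k)) w"
  shows "hip K (lamb X) (lamb Y) = hip H v w"
  using HF[OF f g] Hs.ip_cont[OF v w] LIMSEQ_unique by blast

lemma L4:
  assumes f: "bapprox N f X"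
  shows "ntends (hnorm K) (\<lambda>k. lamb (f k)) (lamb X)"
proof -
  obtain v where v: "ntends (hnorm H) (\<lambda>k. lamw (f k)) v" using lw_conv[OF f] by blast
  have "hnorm K (lamb (f m) - lamb X) = hnorm H (lamw (f m) - v)" for m
  proof -
    have fm: "bapprox N (\<lambda>k. f m) (f m)" using f by (intro bapprox_const) (simp add: bapprox_def)
    have cm: "ntends (hnorm H) (\<lambda>k. lamw (f m)) (lamw (f m))" by (rule Hs.hn.ntends_const)
    show ?thesis
      by (rule iso4[OF Hs.chilb_axioms Ks.chilb_axioms])
         (auto intro: HFv[OF fm fm cm cm] HFv[OF fm f cm v] HFv[OF f fm v cm] HFv[OF f f v v])
  qed
  then show ?thesis using v unfolding ntends_def by simp
qed

lemma lb_lw_ip: "a \<in> Z0 \<Longrightarrow> b \<in> Z0 \<Longrightarrow> hip K (lamb a) (lamb b) = hip H (lamw a) (lamw b)"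
proof -
  assume a: "a \<in> Z0" and b: "b \<in> Z0"
  define N where "N = nat \<lceil>n0 a\<rceil> + nat \<lceil>n0 b\<rceil>"
  have "a \<in> A0N D N" by (rule A0N_mono[OF _ Z0_A0N[OF a]]) (simp add: N_def)
  moreover have "b \<in> A0N D N" by (rule A0N_mono[OF _ Z0_A0N[OF b]]) (simp add: N_def)
  ultimately show ?thesis
    using HFv[OF bapprox_const bapprox_const Hs.hn.ntends_const Hs.hn.ntends_const] by blast
qed

lemma lb_dense0: "nclosure (hnorm K) (lamb ` Z0) = UNIV"
proof -
  have "y \<in> nclosure (hnorm K) (lamb ` Z0)" for y
  proof -
    obtain Y where Y: "\<forall>n. Y n \<in> A1 D" "ntends (hnorm K) (\<lambda>n. lamb (Y n)) y"
      using nclosure_seq[of y "hnorm K" lamb "A1 D"] lb_dense by auto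
    have "\<forall>n. \<exists>a. a \<in> Z0 \<and> hnorm K (lamb a - lamb (Y n)) < inverse (real (Suc n))"
    proof
      fix n
      obtain N f where f: "bapprox N f (Y n)" using Y(1) A1_iff by blast
      obtain M where "\<forall>k\<ge>M. hnorm K (lamb (f k) - lamb (Y n)) < inverse (real (Suc n))"
        using L4[OF f] unfolding Ks.hn.ntends_iff by (meson inverse_positive_iff_positive of_nat_0_less_iff zero_less_Suc)
      then show "\<exists>a. a \<in> Z0 \<and> hnorm K (lamb a - lamb (Y n)) < inverse (real (Suc n))"
        using bapprox_Z0[OF f] by blast
    qed
    then obtain a where a: "\<forall>n. a n \<in> Z0 \<and> hnorm K (lamb (a n) - lamb (Y n)) < inverse (real (Suc n))"
      by metis
    have "(\<lambda>n. hnorm K (lamb (a n) - y)) \<longlonglongrightarrow> 0"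
    proof (rule squeeze0)
      show "(\<lambda>n. inverse (real (Suc n)) + hnorm K (lamb (Y n) - y)) \<longlonglongrightarrow> 0"
        using tendsto_add[OF LIMSEQ_inverse_real_of_nat Y(2)[unfolded ntends_def]] by simp
      show "hnorm K (lamb (a n) - y) \<le> inverse (real (Suc n)) + hnorm K (lamb (Y n) - y)" for n
        using Ks.hn.tri_diff[of "lamb (a n)" y "lamb (Y n)"] a by (meson add_mono less_imp_le order_trans order_refl)
    qed (rule Ks.hnorm_nonneg)
    moreover have "\<forall>k. lamb (a k) \<in> lamb ` Z0" using a by blast
    ultimately have "\<exists>f. (\<forall>k. f k \<in> lamb ` Z0) \<and> (\<lambda>k. hnorm K (f k - y)) \<longlonglongrightarrow> 0"
      by (intro exI[of _ "\<lambda>n. lamb (a n)"]) simp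
    then show ?thesis unfolding nclosure_def ntends_def by blast
  qed
  then show ?thesis by blast
qed

definition UU where "UU = (SOME U. upair H K U \<and> (\<forall>s\<in>Z0. U (lamw s) = lamb s))"

lemma UU_prop: "upair H K UU \<and> (\<forall>s\<in>Z0. UU (lamw s) = lamb s)"
proof -
  have "\<exists>U. upair H K U \<and> (\<forall>s\<in>Z0. U (lamw s) = lamb s)"
    by (rule unitary_ext[OF Hs.chilb_axioms Ks.chilb_axioms lb_lw_ip lw_dense lb_dense0])
  then show ?thesis unfolding UU_def by (rule someI_ex)
qed

sublocale up: upair H K UU using UU_prop by blast

lemma UU_lw: "a \<in> Z0 \<Longrightarrow> UU (lamw a) = lamb a" using UU_prop by blast

end


lemma growth_bound:
  fixes t :: "nat \<Rightarrow> real" and r G :: real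
  assumes nn: "\<And>k. 0 \<le> t k" and r: "0 \<le> r"
    and sq: "\<And>m. (t m)\<^sup>2 \<le> t (2 * m) * t 0"
    and bd: "\<And>k. (t k)\<^sup>2 \<le> G * r ^ (2 * k)"
  shows "t 1 \<le> r * t 0"
proof (cases "t 0 = 0")
  case True
  then have "(t 1)\<^sup>2 \<le> 0" using sq[of 1] by simp
  then have "t 1 = 0" by simp
  then show ?thesis using True by simp
next
  case False
  then have t0: "t 0 > 0" using nn[of 0] by simp
  have Q: "t 1 ^ (2 ^ (n + 1)) * (t 0)\<^sup>2 \<le> t 0 ^ (2 ^ (n + 1)) * (t (2 ^ n))\<^sup>2" for n
  proof (induction n)
    case 0 then show ?case by (simp add: power2_eq_square)
  next
    case (Suc n)
    have "(t 1 ^ (2 ^ (n + 1)) * (t 0)\<^sup>2)\<^sup>2 \<le> (t 0 ^ (2 ^ (n + 1)) * (t (2 ^ n))\<^sup>2)\<^sup>2"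
      using Suc.IH nn by (intro power_mono) auto
    then have A: "t 1 ^ (2 ^ (n + 2)) * (t 0)\<^sup>2 * (t 0)\<^sup>2 \<le> t 0 ^ (2 ^ (n + 2)) * ((t (2 ^ n))\<^sup>2)\<^sup>2"
      by (simp add: power_mult_distrib power_mult[symmetric] mult.commute mult.left_commute)
    have "((t (2 ^ n))\<^sup>2)\<^sup>2 \<le> (t (2 ^ (n + 1)) * t 0)\<^sup>2"
      using sq[of "2 ^ n"] nn by (intro power_mono) auto
    then have "t 0 ^ (2 ^ (n + 2)) * ((t (2 ^ n))\<^sup>2)\<^sup>2 \<le> t 0 ^ (2 ^ (n + 2)) * (t (2 ^ (n + 1)) * t 0)\<^sup>2"
      using nn by (intro mult_left_mono) auto
    with A have "t 1 ^ (2 ^ (n + 2)) * (t 0)\<^sup>2 * (t 0)\<^sup>2 \<le> t 0 ^ (2 ^ (n + 2)) * (t (2 ^ (n + 1)))\<^sup>2 * (t 0)\<^sup>2"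
      by (simp add: power_mult_distrib mult.assoc)
    then have "t 1 ^ (2 ^ (n + 2)) * (t 0)\<^sup>2 \<le> t 0 ^ (2 ^ (n + 2)) * (t (2 ^ (n + 1)))\<^sup>2"
      using t0 by simp
    then show ?case by simp
  qed
  have B: "t 1 ^ (2 ^ (n + 1)) * (t 0)\<^sup>2 \<le> G * (r * t 0) ^ (2 ^ (n + 1))" for n
  proof -
    have "t 1 ^ (2 ^ (n + 1)) * (t 0)\<^sup>2 \<le> t 0 ^ (2 ^ (n + 1)) * (G * r ^ (2 * 2 ^ n))"
      using Q[of n] bd[of "2 ^ n"] nn t0 by (meson mult_left_mono order_trans zero_le_power less_imp_le)
    also have "\<dots> = G * (r * t 0) ^ (2 ^ (n + 1))"
      by (simp add: power_mult_distrib)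
    finally show ?thesis .
  qed
  show ?thesis
  proof (rule ccontr)
    assume "\<not> t 1 \<le> r * t 0"
    then have lt: "r * t 0 < t 1" by simp
    show False
    proof (cases "r = 0")
      case True
      have "t 1 ^ (2 ^ (0 + 1)) * (t 0)\<^sup>2 \<le> 0" using B[of 0] True by simp
      moreover have "t 1 > 0" using lt True by simp
      moreover have "t 1 ^ (2 ^ (0 + 1)) * (t 0)\<^sup>2 > 0"
        using t0 \<open>t 1 > 0\<close> by (intro mult_pos_pos zero_less_power) auto
      ultimately show False by linarith
    next
      case False
      define \<rho> where "\<rho> = r * t 0"
      have \<rho>: "\<rho> > 0" using False r t0 by (simp add: \<rho>_def)
      define x where "x = t 1 / \<rho>"
      have x: "x > 1" using lt \<rho> by (simp add: x_def \<rho>_def)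
      obtain n where n: "G / (t 0)\<^sup>2 < x ^ n" using real_arch_pow[OF x] by blast
      have "x ^ n \<le> x ^ (2 ^ (n + 1))"
        using x by (intro power_increasing) (auto intro: less_imp_le order_trans[OF less_imp_le[OF less_exp]])
      also have "x ^ (2 ^ (n + 1)) \<le> G / (t 0)\<^sup>2"
      proof -
        have "t 1 ^ (2 ^ (n + 1)) = x ^ (2 ^ (n + 1)) * \<rho> ^ (2 ^ (n + 1))"
          using \<rho> by (simp add: x_def power_divide)
        then have "x ^ (2 ^ (n + 1)) * (t 0)\<^sup>2 * \<rho> ^ (2 ^ (n + 1)) \<le> G * \<rho> ^ (2 ^ (n + 1))"
          using B[of n] by (simp add: \<rho>_def mult.commute mult.left_commute)
        then have "x ^ (2 ^ (n + 1)) * (t 0)\<^sup>2 \<le> G" using \<rho> by simp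
        then show ?thesis using t0 by (simp add: field_simps)
      qed
      finally show False using n by simp
    qed
  qed
qed


lemma bop_diff: "bounded_op H T \<Longrightarrow> T (y - x) = T y - T x"
proof -
  assume b: "bounded_op H T"
  then have "T (x + (y - x)) = T x + T (y - x)" unfolding bounded_op_def by blast
  then show ?thesis by (simp add: algebra_simps)
qed

lemma bop_add: "bounded_op H T \<Longrightarrow> T (x + y) = T x + T y"
  by (simp add: bounded_op_def)

lemma (in chilb) bop_tends:
  assumes b: "bounded_op H T" and f: "ntends (hnorm H) f x"
  shows "ntends (hnorm H) (\<lambda>k. T (f k)) (T x)"
proof -
  obtain C where C: "\<And>y. hnorm H (T y) \<le> C * hnorm H y" using b by (auto simp: bounded_op_def)
  show ?thesis unfolding ntends_def
  proof (rule squeeze0)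
    show "(\<lambda>k. C * hnorm H (f k - x)) \<longlonglongrightarrow> 0"
      using tendsto_mult_right_zero[OF f[unfolded ntends_def], of C] by simp
    show "hnorm H (T (f k) - T x) \<le> C * hnorm H (f k - x)" for k
      using C[of "f k - x"] bop_diff[OF b] by simp
  qed (rule hnorm_nonneg)
qed

context setting
begin

lemma sa_bound:
  assumes h: "h \<in> Z0" "iv h = h" and b: "b \<in> Z0"
  shows "hnorm H (lamw (mul h b)) \<le> n0 h * hnorm H (lamw b)"
proof -
  define c where "c k = (mul h ^^ k) b" for k
  have cS: "c (Suc k) = mul h (c k)" for k by (simp add: c_def)
  have c0: "c 0 = b" by (simp add: c_def)
  have cZ: "c k \<in> Z0" for k by (induction k) (simp_all add: c0 cS b mul_closed h)
  have shift: "hip H (lamw (c p)) (lamw (c (Suc q))) = hip H (lamw (c (Suc p))) (lamw (c q))" for p q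
  proof -
    have "hip H (lamw (c p)) (lamw (c (Suc q))) = \<omega> (mul (iv (mul h (c q))) (c p))"
      using lw_ip cZ cS mul_closed h by simp
    also have "iv (mul h (c q)) = mul (iv (c q)) h" using iv_mul h cZ by simp
    also have "mul (mul (iv (c q)) h) (c p) = mul (iv (c q)) (mul h (c p))"
      using assoc iv_closed cZ h by simp
    also have "\<omega> (mul (iv (c q)) (mul h (c p))) = hip H (lamw (c (Suc p))) (lamw (c q))"
      using lw_ip cZ cS mul_closed h by simp
    finally show ?thesis .
  qed
  have move: "hip H (lamw (c p)) (lamw (c q)) = hip H (lamw (c (p + q))) (lamw (c 0))" for p q
  proof (induction q arbitrary: p)
    case 0 then show ?case by simp
  next
    case (Suc q) then show ?case using shift[of p q] by simp
  qed
  define t where "t k = hnorm H (lamw (c k))" for k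
  have tnn: "0 \<le> t k" for k by (simp add: t_def Hs.hnorm_nonneg)
  have sq: "(t m)\<^sup>2 \<le> t (2 * m) * t 0" for m
  proof -
    have "(t m)\<^sup>2 = Re (hip H (lamw (c (m + m))) (lamw (c 0)))"
      using Hs.hnorm_sq move[of m m] by (simp add: t_def)
    also have "\<dots> \<le> cmod (hip H (lamw (c (m + m))) (lamw (c 0)))" by (rule complex_Re_le_cmod)
    also have "\<dots> \<le> t (m + m) * t 0" unfolding t_def by (rule Hs.CS)
    finally show ?thesis by (simp add: mult_2)
  qed
  have nb: "nA' (c k) \<le> n0 h ^ k * nA' b" for k
  proof (induction k)
    case 0 then show ?case by (simp add: c0)
  next
    case (Suc k)
    have "nA' (c (Suc k)) \<le> n0 h * nA' (c k)" using nA_mul2 h cZ cS by simp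
    also have "\<dots> \<le> n0 h * (n0 h ^ k * nA' b)" using Suc n0_nneg[OF h(1)] by (rule mult_left_mono)
    finally show ?case by (simp add: mult.assoc)
  qed
  have n0b: "n0 (c k) \<le> n0 h ^ k * n0 b" for k
  proof (induction k)
    case 0 then show ?case by (simp add: c0)
  next
    case (Suc k)
    have "n0 (c (Suc k)) \<le> n0 h * n0 (c k)" using n0_mul h cZ cS by simp
    also have "\<dots> \<le> n0 h * (n0 h ^ k * n0 b)" using Suc n0_nneg[OF h(1)] by (rule mult_left_mono)
    finally show ?case by (simp add: mult.assoc)
  qed
  have bd: "(t k)\<^sup>2 \<le> (gam * nA' b * n0 b) * n0 h ^ (2 * k)" for k
  proof -
    have "(t k)\<^sup>2 \<le> gam * nA' (c k) * n0 (c k)" unfolding t_def by (rule lw_sq[OF cZ])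
    also have "\<dots> \<le> gam * (n0 h ^ k * nA' b) * (n0 h ^ k * n0 b)"
      using nb[of k] n0b[of k] gam(1) nA_nneg n0_nneg cZ n0_nneg[OF h(1)] nA_nneg[of b]
      by (intro mult_mono mult_left_mono) (auto intro: mult_nonneg_nonneg zero_le_power)
    also have "\<dots> = (gam * nA' b * n0 b) * n0 h ^ (2 * k)"
      by (simp add: power_mult power2_eq_square mult_ac)
    finally show ?thesis .
  qed
  have "t 1 \<le> n0 h * t 0"
    by (rule growth_bound[OF tnn n0_nneg[OF h(1)] sq bd])
  then show ?thesis by (simp add: t_def c0 cS)
qed

lemma lw_mul_bound:
  assumes a: "a \<in> Z0" and b: "b \<in> Z0"
  shows "hnorm H (lamw (mul a b)) \<le> n0 a * hnorm H (lamw b)"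
proof -
  define h where "h = mul (iv a) a"
  have hZ: "h \<in> Z0" using a by (simp add: h_def mul_closed iv_closed)
  have hs: "iv h = h" using a by (simp add: h_def iv_mul iv_closed iv_iv)
  have "mul (iv (mul a b)) (mul a b) = mul (iv b) (mul h b)"
  proof -
    have "mul (iv (mul a b)) (mul a b) = mul (mul (iv b) (iv a)) (mul a b)" using iv_mul a b by simp
    also have "\<dots> = mul (iv b) (mul (iv a) (mul a b))" using assoc a b iv_closed mul_closed by simp
    also have "mul (iv a) (mul a b) = mul h b" using assoc a b iv_closed by (simp add: h_def)
    finally show ?thesis .
  qed
  then have "(hnorm H (lamw (mul a b)))\<^sup>2 = Re (hip H (lamw (mul h b)) (lamw b))"
    using Hs.hnorm_sq lw_ip a b hZ mul_closed by simp
  also have "\<dots> \<le> cmod (hip H (lamw (mul h b)) (lamw b))" by (rule complex_Re_le_cmod)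
  also have "\<dots> \<le> hnorm H (lamw (mul h b)) * hnorm H (lamw b)" by (rule Hs.CS)
  also have "\<dots> \<le> n0 h * hnorm H (lamw b) * hnorm H (lamw b)"
    using sa_bound[OF hZ hs b] Hs.hnorm_nonneg by (rule mult_right_mono)
  also have "n0 h = (n0 a)\<^sup>2" using n0_cstar a by (simp add: h_def)
  finally have "(hnorm H (lamw (mul a b)))\<^sup>2 \<le> (n0 a * hnorm H (lamw b))\<^sup>2"
    by (simp add: power2_eq_square mult_ac)
  then show ?thesis
    by (rule power2_le_imp_le) (simp add: n0_nneg[OF a] Hs.hnorm_nonneg)
qed

lemma piw_bound:
  assumes a: "a \<in> Z0"
  shows "hnorm H (piw a x) \<le> n0 a * hnorm H x"
proof -
  obtain s where s: "\<forall>k. s k \<in> Z0" "ntends (hnorm H) (\<lambda>k. lamw (s k)) x"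
    using nclosure_seq[of x "hnorm H" lamw Z0] lw_dense by auto
  have "(\<lambda>k. hnorm H (piw a (lamw (s k)))) \<longlonglongrightarrow> hnorm H (piw a x)"
    by (rule Hs.hn.ntends_nm[OF Hs.bop_tends[OF piw_bdd[OF a] s(2)]])
  moreover have "(\<lambda>k. n0 a * hnorm H (lamw (s k))) \<longlonglongrightarrow> n0 a * hnorm H x"
    by (intro tendsto_mult tendsto_const Hs.hn.ntends_nm[OF s(2)])
  moreover have "\<forall>k. hnorm H (piw a (lamw (s k))) \<le> n0 a * hnorm H (lamw (s k))"
    using lw_mul_bound a s(1) piw_lw by simp
  ultimately show ?thesis by (intro LIMSEQ_le) auto
qed

end


lemma (in chilb) unif_cauchy:
  assumes add: "\<And>k x y. P k (x + y) = P k x + P k y"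
    and bnd: "\<And>k x. hnorm H (P k x) \<le> C * hnorm H x" and C: "0 \<le> C"
    and dense: "nclosure (hnorm H) S = UNIV"
    and cd: "\<And>d. d \<in> S \<Longrightarrow> ncauchy (hnorm H) (\<lambda>k. P k d)"
  shows "ncauchy (hnorm H) (\<lambda>k. P k x)"
  unfolding ncauchy_def
proof (intro allI impI)
  fix e :: real assume e: "e > 0"
  define \<delta> where "\<delta> = e / (3 * (C + 1))"
  have \<delta>: "\<delta> > 0" using e C by (simp add: \<delta>_def)
  have diff: "P k (y - z) = P k y - P k z" for k y z
    using add[of k z "y - z"] by (simp add: algebra_simps)
  obtain g where g: "\<forall>k. g k \<in> S" "ntends (hnorm H) g x"
    using dense unfolding nclosure_def by blast
  obtain m where m: "hnorm H (g m - x) < \<delta>" using g(2) \<delta> unfolding hn.ntends_iff by blast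
  define d where "d = g m"
  have dS: "d \<in> S" using g(1) by (simp add: d_def)
  obtain M where M: "\<forall>i\<ge>M. \<forall>j\<ge>M. hnorm H (P i d - P j d) < e / 3"
    using cd[OF dS] e unfolding ncauchy_def by (meson divide_pos_pos zero_less_numeral)
  have "hnorm H (P i x - P j x) < e" if "i \<ge> M" "j \<ge> M" for i j
  proof -
    have eq: "P i x - P j x = P i (x - d) + (P i d - P j d) + P j (d - x)"
      by (simp add: diff)
    have "hnorm H (P i x - P j x) \<le> hnorm H (P i (x - d)) + hnorm H (P i d - P j d) + hnorm H (P j (d - x))"
      unfolding eq by (meson add_mono hn.tri order_trans order_refl)
    also have "\<dots> \<le> C * hnorm H (x - d) + hnorm H (P i d - P j d) + C * hnorm H (d - x)"
      using bnd by (meson add_mono order_refl)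
    also have "\<dots> < C * \<delta> + e / 3 + C * \<delta>"
    proof -
      have h1: "hnorm H (x - d) < \<delta>" "hnorm H (d - x) < \<delta>" using m hn.commute by (auto simp: d_def)
      have "C * hnorm H (x - d) \<le> C * \<delta>" "C * hnorm H (d - x) \<le> C * \<delta>"
        using h1 C by (auto intro: mult_left_mono less_imp_le)
      then show ?thesis using M that by fastforce
    qed
    also have "\<dots> \<le> e"
    proof -
      have "C * \<delta> \<le> e / 3" using C e by (simp add: \<delta>_def field_simps)
      then show ?thesis by linarith
    qed
    finally show ?thesis .
  qed
  then show "\<exists>M. \<forall>i\<ge>M. \<forall>j\<ge>M. hnorm H (P i x - P j x) < e" by blast
qed

context setting
begin

lemma piw_boundN: "bapprox N f X \<Longrightarrow> hnorm H (piw (f k) x) \<le> real N * hnorm H x"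
  using piw_bound[OF bapprox_Z0] bapprox_n0 Hs.hnorm_nonneg
  by (meson mult_right_mono order_trans)

lemma strong_cauchy:
  assumes f: "bapprox N f X"
  shows "ncauchy (hnorm H) (\<lambda>k. piw (f k) x)"
proof (rule Hs.unif_cauchy[of _ "real N" "lamw ` Z0"])
  show "piw (f k) (x + y) = piw (f k) x + piw (f k) y" for k x y
    using bop_add[OF piw_bdd[OF bapprox_Z0[OF f]]] .
  show "hnorm H (piw (f k) x) \<le> real N * hnorm H x" for k x by (rule piw_boundN[OF f])
  show "nclosure (hnorm H) (lamw ` Z0) = UNIV" by (rule lw_dense)
  show "0 \<le> real N" by simp
  fix d assume "d \<in> lamw ` Z0"
  then obtain b where b: "b \<in> Z0" "d = lamw b" by blast
  define M where "M = N * nat \<lceil>n0 b\<rceil>"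
  have fZ: "f k \<in> Z0" "n0 (f k) \<le> real N" for k using bapprox_Z0[OF f] bapprox_n0[OF f] by auto
  have "mul (f k) b \<in> A0N D M" for k
  proof -
    have "n0 (mul (f k) b) \<le> n0 (f k) * n0 b" using n0_mul fZ b by blast
    also have "\<dots> \<le> real N * real (nat \<lceil>n0 b\<rceil>)"
      using fZ(2)[of k] n0_nneg[OF b(1)] real_nat_ceiling_ge[of "n0 b"] by (intro mult_mono) (auto simp: of_nat_0_le_iff)
    finally show ?thesis using mul_closed fZ b by (simp add: A0N_iff M_def)
  qed
  moreover have "ncauchy nA' (\<lambda>k. mul (f k) b)"
  proof (rule cauchy_comb[of nA' f f "n0 b"])
    show "ncauchy nA' f" using f nAg.ntends_cauchy by (auto simp: bapprox_def)
    then show "ncauchy nA' f" .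
    show "0 \<le> n0 b" using n0_nneg b by simp
    show "nA' (mul (f i) b - mul (f j) b) \<le> n0 b * (nA' (f i - f j) + nA' (f i - f j))" for i j
    proof -
      have "nA' (mul (f i) b - mul (f j) b) = nA' (mul (f i - f j) b)" using mul_diffL fZ b by simp
      also have "\<dots> \<le> nA' (f i - f j) * n0 b" using nA_mul Z0_diff fZ b by blast
      also have "\<dots> \<le> n0 b * (nA' (f i - f j) + nA' (f i - f j))"
        using n0_nneg[OF b(1)] nA_nneg[of "f i - f j"] by (simp add: algebra_simps)
      finally show ?thesis .
    qed
  qed
  ultimately have "ncauchy (hnorm H) (\<lambda>k. lamw (mul (f k) b))" by (rule lw_cauchy)
  then show "ncauchy (hnorm H) (\<lambda>k. piw (f k) d)" using piw_lw fZ b by simp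
qed

definition Tl where "Tl f x = (THE y. ntends (hnorm H) (\<lambda>k. piw (f k) x) y)"

lemma Tl_tends: "bapprox N f X \<Longrightarrow> ntends (hnorm H) (\<lambda>k. piw (f k) x) (Tl f x)"
proof -
  assume f: "bapprox N f X"
  obtain y where y: "ntends (hnorm H) (\<lambda>k. piw (f k) x) y"
    using strong_cauchy[OF f] Hs.complete by blast
  then have "Tl f x = y" unfolding Tl_def using Hs.hn.ntends_unique by blast
  then show ?thesis using y by simp
qed

lemma Tl_bound: "bapprox N f X \<Longrightarrow> hnorm H (Tl f x) \<le> real N * hnorm H x"
proof -
  assume f: "bapprox N f X"
  have "(\<lambda>k. hnorm H (piw (f k) x)) \<longlonglongrightarrow> hnorm H (Tl f x)"
    by (rule Hs.hn.ntends_nm[OF Tl_tends[OF f]])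
  then show ?thesis using piw_boundN[OF f] by (intro LIMSEQ_le_const2) auto
qed

lemma Tl_add: "bapprox N f X \<Longrightarrow> Tl f (x + y) = Tl f x + Tl f y"
proof -
  assume f: "bapprox N f X"
  have "ntends (hnorm H) (\<lambda>k. piw (f k) x + piw (f k) y) (Tl f x + Tl f y)"
    by (rule Hs.hn.ntends_add[OF Tl_tends[OF f] Tl_tends[OF f]])
  moreover have "piw (f k) x + piw (f k) y = piw (f k) (x + y)" for k
    using bop_add[OF piw_bdd[OF bapprox_Z0[OF f]]] by simp
  ultimately show ?thesis using Tl_tends[OF f, of "x + y"] Hs.hn.ntends_unique by simp
qed

lemma Tl_cont:
  assumes f: "bapprox N f X" and g: "ntends (hnorm H) g x"
  shows "ntends (hnorm H) (\<lambda>k. Tl f (g k)) (Tl f x)"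
  unfolding ntends_def
proof (rule squeeze0)
  have diff: "Tl f (y - z) = Tl f y - Tl f z" for y z
    using Tl_add[OF f, of z "y - z"] by (simp add: algebra_simps)
  show "hnorm H (Tl f (g k) - Tl f x) \<le> real N * hnorm H (g k - x)" for k
    using Tl_bound[OF f, of "g k - x"] diff by simp
  show "(\<lambda>k. real N * hnorm H (g k - x)) \<longlonglongrightarrow> 0"
    using tendsto_mult_right_zero[OF g[unfolded ntends_def]] by simp
qed (rule Hs.hnorm_nonneg)

lemma PX:
  assumes f: "bapprox N f X" and Y: "Y \<in> A1 D"
  shows "pib X (lamb Y) = UU (Tl f (inv UU (lamb Y)))"
proof -
  obtain M g where g: "bapprox M g Y" using Y A1_iff by blast
  define L where "L = max N M"
  have fL: "bapprox L f X" using bapprox_mono[OF _ f] by (simp add: L_def)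
  have gL: "bapprox L g Y" using bapprox_mono[OF _ g] by (simp add: L_def)
  have p: "ntends nA' (\<lambda>k. mul (f k) (g k)) (prod1 D X Y)" by (rule prod_lim[OF fL gL])
  have "mul (f k) (g k) \<in> A0N D (L * L)" for k
  proof -
    have Z: "f k \<in> Z0" "g k \<in> Z0" "n0 (f k) \<le> real L" "n0 (g k) \<le> real L"
      using bapprox_Z0[OF fL] bapprox_Z0[OF gL] bapprox_n0[OF fL] bapprox_n0[OF gL] by auto
    have "n0 (mul (f k) (g k)) \<le> n0 (f k) * n0 (g k)" using n0_mul Z by blast
    also have "\<dots> \<le> real L * real L" using Z n0_nneg by (intro mult_mono) auto
    finally show ?thesis using mul_closed Z by (simp add: A0N_iff)
  qed
  then have bp: "bapprox (L * L) (\<lambda>k. mul (f k) (g k)) (prod1 D X Y)" using p by (simp add: bapprox_def)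
  have l1: "ntends (hnorm K) (\<lambda>k. lamb (mul (f k) (g k))) (lamb (prod1 D X Y))" by (rule L4[OF bp])
  have e1: "lamb (mul (f k) (g k)) = UU (piw (f k) (lamw (g k)))" for k
    using UU_lw piw_lw mul_closed bapprox_Z0[OF f] bapprox_Z0[OF g] by simp
  define v where "v = inv UU (lamb Y)"
  have "ntends (hnorm H) (\<lambda>k. inv UU (lamb (g k))) v"
    unfolding v_def by (rule up.invU_tends[OF L4[OF g]])
  moreover have "inv UU (lamb (g k)) = lamw (g k)" for k
    using UU_lw[OF bapprox_Z0[OF g]] up.inv_U by metis
  ultimately have gv: "ntends (hnorm H) (\<lambda>k. lamw (g k)) v" by simp
  have "ntends (hnorm H) (\<lambda>k. piw (f k) (lamw (g k))) (Tl f v)"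
    unfolding ntends_def
  proof (rule squeeze0)
    show "hnorm H (piw (f k) (lamw (g k)) - Tl f v)
        \<le> real N * hnorm H (lamw (g k) - v) + hnorm H (piw (f k) v - Tl f v)" for k
    proof -
      have eq: "piw (f k) (lamw (g k)) - Tl f v = piw (f k) (lamw (g k) - v) + (piw (f k) v - Tl f v)"
        using bop_diff[OF piw_bdd[OF bapprox_Z0[OF f, of k]], of "lamw (g k)" v] by (simp add: algebra_simps)
      have "hnorm H (piw (f k) (lamw (g k)) - Tl f v)
          \<le> hnorm H (piw (f k) (lamw (g k) - v)) + hnorm H (piw (f k) v - Tl f v)"
        unfolding eq by (rule Hs.hn.tri)
      then show ?thesis using piw_boundN[OF f, of k "lamw (g k) - v"] by linarith
    qed
    show "(\<lambda>k. real N * hnorm H (lamw (g k) - v) + hnorm H (piw (f k) v - Tl f v)) \<longlonglongrightarrow> 0"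
      using tendsto_add[OF tendsto_mult_right_zero[OF gv[unfolded ntends_def]] Tl_tends[OF f, of v, unfolded ntends_def]]
      by simp
  qed (rule Hs.hnorm_nonneg)
  then have "ntends (hnorm K) (\<lambda>k. UU (piw (f k) (lamw (g k)))) (UU (Tl f v))"
    by (rule up.U_tends)
  then have "ntends (hnorm K) (\<lambda>k. lamb (mul (f k) (g k))) (UU (Tl f v))" using e1 by simp
  then have "lamb (prod1 D X Y) = UU (Tl f v)" using l1 Ks.hn.ntends_unique by blast
  then show ?thesis using pib_lb[OF bapprox_A1[OF f] Y] v_def by simp
qed

lemma opext:
  assumes f: "bapprox N f X"
  shows "op_ext K (pib X) (lamb ` A1 D) (UU x) = UU (Tl f x)"
proof -
  have key: "ntends (hnorm K) (\<lambda>k. pib X (\<phi> k)) (UU (Tl f x))"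
    if \<phi>: "\<forall>k. \<phi> k \<in> lamb ` A1 D" "ntends (hnorm K) \<phi> (UU x)" for \<phi>
  proof -
    have e: "pib X (\<phi> k) = UU (Tl f (inv UU (\<phi> k)))" for k
    proof -
      obtain Y where Y: "Y \<in> A1 D" "\<phi> k = lamb Y" using \<phi>(1) by blast
      show ?thesis using PX[OF f Y(1)] Y(2) by simp
    qed
    have "ntends (hnorm H) (\<lambda>k. inv UU (\<phi> k)) x" using up.invU_tends[OF \<phi>(2)] by simp
    then have "ntends (hnorm H) (\<lambda>k. Tl f (inv UU (\<phi> k))) (Tl f x)" by (rule Tl_cont[OF f])
    then show ?thesis unfolding e by (rule up.U_tends)
  qed
  obtain \<phi> where \<phi>: "\<forall>k. \<phi> k \<in> lamb ` A1 D" "ntends (hnorm K) \<phi> (UU x)"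
    using lb_dense unfolding nclosure_def by blast
  show ?thesis
    unfolding op_ext_def
  proof (rule the_equality)
    show "\<exists>\<phi>. (\<forall>k. \<phi> k \<in> lamb ` A1 D) \<and> ntends (hnorm K) \<phi> (UU x)
        \<and> ntends (hnorm K) (\<lambda>k. pib X (\<phi> k)) (UU (Tl f x))"
      using \<phi> key by blast
  next
    fix y assume "\<exists>\<phi>. (\<forall>k. \<phi> k \<in> lamb ` A1 D) \<and> ntends (hnorm K) \<phi> (UU x)
        \<and> ntends (hnorm K) (\<lambda>k. pib X (\<phi> k)) y"
    then obtain \<psi> where "\<forall>k. \<psi> k \<in> lamb ` A1 D" "ntends (hnorm K) \<psi> (UU x)"
        "ntends (hnorm K) (\<lambda>k. pib X (\<psi> k)) y" by blast
    then show "y = UU (Tl f x)" using key Ks.hn.ntends_unique by blast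
  qed
qed

lemma Tl_const: "a \<in> A0N D N \<Longrightarrow> Tl (\<lambda>k. a) x = piw a x"
proof -
  assume a: "a \<in> A0N D N"
  have "ntends (hnorm H) (\<lambda>k. piw a x) (Tl (\<lambda>k. a) x)" using Tl_tends[OF bapprox_const[OF a]] .
  moreover have "ntends (hnorm H) (\<lambda>k. piw a x) (piw a x)" by (rule Hs.hn.ntends_const)
  ultimately show ?thesis by (rule Hs.hn.ntends_unique)
qed

lemma main:
  shows "(\<forall>X\<in>A1 D. \<exists>C. \<forall>Y\<in>A1 D. hnorm K (pib X (lamb Y)) \<le> C * hnorm K (lamb Y))
    \<and> (\<exists>U. unitary_map H K U
        \<and> (\<forall>A\<in>A0 D. lamb A = U (lamw A))
        \<and> (\<forall>A\<in>A0 D. \<forall>x. op_ext K (pib A) (lamb ` A1 D) (U x) = U (piw A x))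
        \<and> (\<forall>X\<in>A1 D. \<exists>N f. (\<forall>k. f k \<in> A0N D N) \<and>
             (\<forall>x. ntends (hnorm K) (\<lambda>k. U (piw (f k) x)) (op_ext K (pib X) (lamb ` A1 D) (U x))))
        \<and> (\<forall>X\<in>A1 D. in_bicommutant H (piw ` A0 D)
             (\<lambda>x. inv U (op_ext K (pib X) (lamb ` A1 D) (U x))))
        \<and> (\<forall>X\<in>A1 D. \<exists>N f. (\<forall>k. f k \<in> A0N D N) \<and> ntends (hnorm K) (\<lambda>k. U (lamw (f k))) (lamb X)))"
proof (intro conjI ballI exI[of _ UU])
  fix X assume X: "X \<in> A1 D"
  obtain N f where f: "bapprox N f X" using X A1_iff by blast
  show "\<exists>C. \<forall>Y\<in>A1 D. hnorm K (pib X (lamb Y)) \<le> C * hnorm K (lamb Y)"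
  proof (intro exI[of _ "real N"] ballI)
    fix Y assume Y: "Y \<in> A1 D"
    have "hnorm K (pib X (lamb Y)) = hnorm H (Tl f (inv UU (lamb Y)))"
      using PX[OF f Y] up.norm_U by simp
    also have "\<dots> \<le> real N * hnorm H (inv UU (lamb Y))" by (rule Tl_bound[OF f])
    also have "hnorm H (inv UU (lamb Y)) = hnorm K (lamb Y)"
      using up.norm_U[of "inv UU (lamb Y)"] by simp
    finally show "hnorm K (pib X (lamb Y)) \<le> real N * hnorm K (lamb Y)" .
  qed
next
  show "unitary_map H K UU" by (rule up.unitary)
next
  fix A assume "A \<in> A0 D" then show "lamb A = UU (lamw A)" using UU_lw by simp
next
  fix A assume A: "A \<in> A0 D"
  show "\<forall>x. op_ext K (pib A) (lamb ` A1 D) (UU x) = UU (piw A x)"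
  proof
    fix x
    have a: "A \<in> A0N D (nat \<lceil>n0 A\<rceil>)" by (rule Z0_A0N[OF A])
    show "op_ext K (pib A) (lamb ` A1 D) (UU x) = UU (piw A x)"
      using opext[OF bapprox_const[OF a]] Tl_const[OF a] by simp
  qed
next
  fix X assume X: "X \<in> A1 D"
  obtain N f where f: "bapprox N f X" using X A1_iff by blast
  show "\<exists>N f. (\<forall>k. f k \<in> A0N D N) \<and>
             (\<forall>x. ntends (hnorm K) (\<lambda>k. UU (piw (f k) x)) (op_ext K (pib X) (lamb ` A1 D) (UU x)))"
  proof (intro exI[of _ N] exI[of _ f] conjI allI)
    show "f k \<in> A0N D N" for k using f by (simp add: bapprox_def)
    show "ntends (hnorm K) (\<lambda>k. UU (piw (f k) x)) (op_ext K (pib X) (lamb ` A1 D) (UU x))" for x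
      unfolding opext[OF f] by (rule up.U_tends[OF Tl_tends[OF f]])
  qed
next
  fix X assume X: "X \<in> A1 D"
  obtain N f where f: "bapprox N f X" using X A1_iff by blast
  have eq: "(\<lambda>x. inv UU (op_ext K (pib X) (lamb ` A1 D) (UU x))) = Tl f"
    using opext[OF f] by (simp add: fun_eq_iff)
  show "in_bicommutant H (piw ` A0 D) (\<lambda>x. inv UU (op_ext K (pib X) (lamb ` A1 D) (UU x)))"
    unfolding eq in_bicommutant_def
  proof (intro allI impI)
    fix B x assume B: "bounded_op H B \<and> (\<forall>P\<in>piw ` A0 D. \<forall>x. B (P x) = P (B x))"
    have "ntends (hnorm H) (\<lambda>k. B (piw (f k) x)) (B (Tl f x))"
      using Hs.bop_tends[OF _ Tl_tends[OF f], of B x] B by simp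
    moreover have "B (piw (f k) x) = piw (f k) (B x)" for k
      using B bapprox_Z0[OF f] by blast
    ultimately have "ntends (hnorm H) (\<lambda>k. piw (f k) (B x)) (B (Tl f x))" by simp
    then show "B (Tl f x) = Tl f (B x)" using Tl_tends[OF f] Hs.hn.ntends_unique by blast
  qed
next
  fix X assume X: "X \<in> A1 D"
  obtain N f where f: "bapprox N f X" using X A1_iff by blast
  have "UU (lamw (f k)) = lamb (f k)" for k using UU_lw bapprox_Z0[OF f] by blast
  then show "\<exists>N f. (\<forall>k. f k \<in> A0N D N) \<and> ntends (hnorm K) (\<lambda>k. UU (lamw (f k))) (lamb X)"
    using f L4[OF f] by (intro exI[of _ N] exI[of _ f]) (simp add: bapprox_def)
qed

end

theorem proposition6p2:
  fixes D :: "'a::ab_group_add cq_data" and \<omega> :: "'a \<Rightarrow> complex"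
    and H :: "'h::ab_group_add hspace" and lamw :: "'a \<Rightarrow> 'h" and piw :: "'a \<Rightarrow> 'h \<Rightarrow> 'h"
    and K :: "'k::ab_group_add hspace" and lamb :: "'a \<Rightarrow> 'k" and pib :: "'a \<Rightarrow> 'k \<Rightarrow> 'k"
  assumes "CQ_setting D" and "pos_functional D \<omega>"
    and "is_GNS0 D \<omega> H lamw piw" and "is_GNS1 D \<omega> K lamb pib"
  shows "(\<forall>X\<in>A1 D. \<exists>C. \<forall>Y\<in>A1 D. hnorm K (pib X (lamb Y)) \<le> C * hnorm K (lamb Y))
    \<and> (\<exists>U. unitary_map H K U
        \<and> (\<forall>A\<in>A0 D. lamb A = U (lamw A))
        \<and> (\<forall>A\<in>A0 D. \<forall>x. op_ext K (pib A) (lamb ` A1 D) (U x) = U (piw A x))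
        \<and> (\<forall>X\<in>A1 D. \<exists>N f. (\<forall>k. f k \<in> A0N D N) \<and>
             (\<forall>x. ntends (hnorm K) (\<lambda>k. U (piw (f k) x)) (op_ext K (pib X) (lamb ` A1 D) (U x))))
        \<and> (\<forall>X\<in>A1 D. in_bicommutant H (piw ` A0 D)
             (\<lambda>x. inv U (op_ext K (pib X) (lamb ` A1 D) (U x))))
        \<and> (\<forall>X\<in>A1 D. \<exists>N f. (\<forall>k. f k \<in> A0N D N) \<and> ntends (hnorm K) (\<lambda>k. U (lamw (f k))) (lamb X)))"
  using setting.main[OF setting.intro[OF assms]] .

end
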